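(* Let $k,l,m$ be positive integers, $n=(l+1)k$, and let $A\in\mathbb{R}^{m\times n}$ have $2k$-restricted isometry constant $\delta_{2k}\in[\frac{\sqrt2}{2},1)$. Let $x\in\mathbb{R}^n$, $\epsilon\ge0$, $e\in\mathbb{R}^m$ with $\|e\|_2\le\epsilon$, $y=Ax+e$, let $p\in(0,1)$, let $x^{\star}$ be a solution of $\min_{\gamma}\|\gamma\|_p$ subject to $\|y-A\gamma\|_2\le\epsilon$, and let $h=x-x^{\star}$, $T_0=\{1,\dots,k\}$, $T_0^c=\{k+1,\dots,n\}$. Then $$\|h_{T_0}\|_p^p\le\frac{2^{\frac{3p}{2}}}{(1-\delta_{2k})^{\frac p2}}k^{1-\frac p2}\epsilon^p+C(p)\|h_{T_0^c}\|_p^p,$$ where $$C(p)=\begin{cases}\left(\dfrac{\big((2-\delta_{2k})^{1-\frac{2}{p}}+2\delta_{2k}\big)g(p)}{1-\delta_{2k}}\right)^{p/2}, & p\in(0,p^{\star}],\\[2ex] \left(\dfrac{(2-\delta_{2k})^{1-\frac{2}{p}}g(p)+2^{2-\frac{2}{p}}\delta_{2k}}{1-\delta_{2k}}\right)^{p/2}, & p\in(p^{\star},1).\end{cases}$$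
   Context: For $1\le s\le n$, the $s$-restricted isometry constant $\delta_s$ of $A$ is the smallest constant such that $(1-\delta_s)\|z\|_2^2\le\|Az\|_2^2\le(1+\delta_s)\|z\|_2^2$ for all $s$-sparse $z\in\mathbb{R}^n$. For $p\in(0,1)$, $\|\gamma\|_p=(\sum_i|\gamma_i|^p)^{1/p}$. For a vector $v$ and index set $T$, $v_T$ is the vector equal to $v$ on $T$ and zero elsewhere. $g(p)=\frac{p}{2}(1-\frac{p}{2})^{\frac{2}{p}-1}$. $p^{\star}\approx0.45418$ is the unique solution in $(0,1]$ of $(\frac{p}{2})^{1/2}(2-p)^{\frac1p-\frac12}=1$. *)

theory Defs
  imports Complex_Main
begin

text \<open>Vectors in R^n are functions nat => real, only entries 0..n-1 matter.
  Matrices in R^(m x n) are functions nat => nat => real, entries A i j with i<m, j<n.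
  Index i (0-based) corresponds to index i+1 of the paper.\<close>

definition mat_vec :: "nat \<Rightarrow> nat \<Rightarrow> (nat \<Rightarrow> nat \<Rightarrow> real) \<Rightarrow> (nat \<Rightarrow> real) \<Rightarrow> (nat \<Rightarrow> real)" where
  "mat_vec m n A z = (\<lambda>i. if i < m then (\<Sum>j<n. A i j * z j) else 0)"

definition norm2 :: "nat \<Rightarrow> (nat \<Rightarrow> real) \<Rightarrow> real" where
  "norm2 n v = sqrt (\<Sum>i<n. (v i)\<^sup>2)"

definition lpnorm :: "nat \<Rightarrow> real \<Rightarrow> (nat \<Rightarrow> real) \<Rightarrow> real" where
  "lpnorm n p v = (\<Sum>i<n. \<bar>v i\<bar> powr p) powr (1 / p)"

definition restrict_vec :: "(nat \<Rightarrow> real) \<Rightarrow> nat set \<Rightarrow> (nat \<Rightarrow> real)" where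
  "restrict_vec v T = (\<lambda>i. if i \<in> T then v i else 0)"

definition sparse :: "nat \<Rightarrow> nat \<Rightarrow> (nat \<Rightarrow> real) \<Rightarrow> bool" where
  "sparse n s z \<longleftrightarrow> card {i. i < n \<and> z i \<noteq> 0} \<le> s"

definition ric :: "nat \<Rightarrow> nat \<Rightarrow> (nat \<Rightarrow> nat \<Rightarrow> real) \<Rightarrow> nat \<Rightarrow> real" where
  "ric m n A s = Inf {\<delta>. \<forall>z. sparse n s z \<longrightarrow>
      (1 - \<delta>) * (norm2 n z)\<^sup>2 \<le> (norm2 m (mat_vec m n A z))\<^sup>2 \<and>
      (norm2 m (mat_vec m n A z))\<^sup>2 \<le> (1 + \<delta>) * (norm2 n z)\<^sup>2}"

definition g_fun :: "real \<Rightarrow> real" where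
  "g_fun p = p / 2 * (1 - p / 2) powr (2 / p - 1)"

definition p_star :: real where
  "p_star = (THE p. 0 < p \<and> p \<le> 1 \<and> (p / 2) powr (1/2) * (2 - p) powr (1 / p - 1/2) = 1)"

definition C_const :: "real \<Rightarrow> real \<Rightarrow> real" where
  "C_const \<delta> p = (if p \<le> p_star
     then (((2 - \<delta>) powr (1 - 2 / p) + 2 * \<delta>) * g_fun p / (1 - \<delta>)) powr (p / 2)
     else (((2 - \<delta>) powr (1 - 2 / p) * g_fun p + 2 powr (2 - 2 / p) * \<delta>) / (1 - \<delta>)) powr (p / 2))"

end

theory Submission
  imports Defs "HOL-Analysis.Convex"
begin

lemma amgm_core:
  fixes q Y Q :: real
  assumes q: "q > 0" and Y: "0 \<le> Y" "Y \<le> Q"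
  shows "Y powr q * (Q - Y) \<le> q powr q / (q+1) powr (q+1) * Q powr (q+1)"
proof (cases "Y = 0 \<or> Y = Q")
  case True
  then show ?thesis using q Y by (auto intro!: mult_nonneg_nonneg divide_nonneg_nonneg)
next
  case False
  hence Yp: "Y > 0" and YQ: "Y < Q" using Y by auto
  define al where "al = q/(q+1)"
  define be where "be = 1/(q+1)"
  have ab: "0 \<le> al" "0 \<le> be" "al + be = 1" using q by (auto simp: al_def be_def field_simps)
  have "(Y/q) powr al * (Q - Y) powr be \<le> al * (Y/q) + be * (Q - Y)"
    by (rule Youngs_inequality_0) (use ab q Yp YQ in auto)
  also have "\<dots> = Q/(q+1)"
  proof -
    have "al * (Y/q) = Y/(q+1)" using q by (simp add: al_def)
    moreover have "be * (Q - Y) = (Q-Y)/(q+1)" by (simp add: be_def)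
    ultimately show ?thesis by (simp add: add_divide_distrib[symmetric])
  qed
  finally have h1: "(Y/q) powr al * (Q - Y) powr be \<le> Q/(q+1)" .
  have h2: "((Y/q) powr al * (Q - Y) powr be) powr (q+1) \<le> (Q/(q+1)) powr (q+1)"
    by (rule powr_mono2) (use h1 q in auto)
  have "((Y/q) powr al * (Q - Y) powr be) powr (q+1) = (Y/q) powr q * (Q - Y)"
    using q Yp YQ
    by (simp add: powr_mult powr_powr al_def be_def)
  hence "(Y/q) powr q * (Q - Y) \<le> Q powr (q+1) / (q+1) powr (q+1)"
    using h2 q YQ Yp by (simp add: powr_divide)
  hence "Y powr q / q powr q * (Q - Y) \<le> Q powr (q+1) / (q+1) powr (q+1)"
    using q Yp by (simp add: powr_divide)
  hence "Y powr q * (Q - Y) \<le> q powr q * (Q powr (q+1) / (q+1) powr (q+1))"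
    using q by (simp add: field_simps)
  then show ?thesis by (simp add: field_simps)
qed

lemma g_eq:
  assumes p: "0 < p" "p < 1"
  shows "g_fun p = (2/p-1) powr (2/p-1) / (2/p) powr (2/p)"
proof -
  define q where "q = 2/p - 1"
  have q: "q > 0" using p by (simp add: q_def field_simps)
  have q1: "q + 1 = 2/p" by (simp add: q_def)
  have "(q+1) powr (q+1) = (q+1) * (q+1) powr q"
    using q by (simp add: powr_add)
  hence "q powr q / (q+1) powr (q+1) = (1/(q+1)) * (q/(q+1)) powr q"
    using q by (simp add: powr_divide)
  also have "1/(q+1) = p/2" using q1 by simp
  also have "q/(q+1) = 1 - p/2" using q1 p by (simp add: q_def field_simps)
  finally have "q powr q / (q+1) powr (q+1) = g_fun p"
    by (simp add: g_fun_def q_def)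
  thus ?thesis using q1 by (simp add: q_def)
qed

lemma g_nonneg: "0 < p \<Longrightarrow> p < 1 \<Longrightarrow> 0 \<le> g_fun p"
  by (simp add: g_fun_def)

lemma amgm_g:
  fixes X Q c p :: real
  assumes p: "0 < p" "p < 1" and X: "0 \<le> X" and c: "c > 0" and Q: "0 \<le> Q"
  shows "X powr (2/p-1) * (Q - c*X) \<le> c powr (1 - 2/p) * g_fun p * Q powr (2/p)"
proof (cases "Q - c*X \<le> 0")
  case True
  have "X powr (2/p-1) * (Q - c*X) \<le> 0" using True by (simp add: mult_nonneg_nonpos)
  also have "0 \<le> c powr (1 - 2/p) * g_fun p * Q powr (2/p)" using g_nonneg[OF p] by simp
  finally show ?thesis .
next
  case False
  define q where "q = 2/p - 1"
  have q: "q > 0" using p by (simp add: q_def field_simps)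
  have "(c*X) powr q * (Q - c*X) \<le> q powr q / (q+1) powr (q+1) * Q powr (q+1)"
    by (rule amgm_core) (use q X c False in auto)
  hence "(c*X) powr q * (Q - c*X) \<le> g_fun p * Q powr (2/p)"
    using g_eq[OF p] by (simp add: q_def)
  hence "c powr q * (X powr q * (Q - c*X)) \<le> g_fun p * Q powr (2/p)"
    using c X by (simp add: powr_mult mult.assoc)
  hence "X powr q * (Q - c*X) \<le> g_fun p * Q powr (2/p) / c powr q"
    using c by (simp add: field_simps)
  also have "\<dots> = c powr (1 - 2/p) * g_fun p * Q powr (2/p)"
  proof -
    have "c powr (1 - 2/p) = c powr (- q)" by (simp add: q_def)
    also have "\<dots> = inverse (c powr q)" by (rule powr_minus)
    finally show ?thesis by (simp add: divide_inverse)
  qed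
  finally show ?thesis by (simp add: q_def)
qed

lemma half_bound:
  fixes x0 Q be :: real
  assumes "0 \<le> x0" "x0 \<le> Q" "0 \<le> be" "be \<le> 1"
  shows "x0 powr be * (Q - x0/2) \<le> 2 powr (-be) * Q powr (be+1)"
proof (cases "x0 = 0")
  case True thus ?thesis using assms by simp
next
  case False
  hence x0: "x0 > 0" using assms by simp
  hence Q: "Q > 0" using assms by simp
  have key: "(2*x0) powr be * (Q - x0/2) \<le> Q powr (be+1)"
  proof (cases "2*x0 \<le> Q")
    case True
    have "(2*x0) powr be \<le> Q powr be" by (rule powr_mono2) (use assms True in auto)
    moreover have "Q - x0/2 \<le> Q" using x0 by simp
    ultimately have "(2*x0) powr be * (Q - x0/2) \<le> Q powr be * Q"
      by (rule mult_mono) (use assms in auto)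
    thus ?thesis using Q by (simp add: powr_add)
  next
    case False
    have r: "2*x0/Q \<ge> 1" using False Q by simp
    have "(2*x0/Q) powr be \<le> (2*x0/Q) powr 1" by (rule powr_mono) (use r assms in auto)
    hence "(2*x0/Q) powr be \<le> 2*x0/Q" using r by simp
    hence "(2*x0) powr be \<le> Q powr be * (2*x0/Q)" using Q x0 by (simp add: powr_divide field_simps)
    hence "(2*x0) powr be * (Q - x0/2) \<le> Q powr be * (2*x0/Q) * (Q - x0/2)"
      by (rule mult_right_mono) (use assms in auto)
    also have "\<dots> = Q powr be * ((2*x0*Q - x0*x0) / Q)" using Q by (simp add: field_simps)
    also have "\<dots> \<le> Q powr be * (Q*Q/Q)"
    proof -
      have "2*x0*Q - x0*x0 \<le> Q*Q" using zero_le_power2[of "Q - x0"] by (simp add: power2_eq_square algebra_simps)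
      thus ?thesis using Q by (intro mult_left_mono divide_right_mono) auto
    qed
    also have "\<dots> = Q powr (be+1)" using Q by (simp add: powr_add)
    finally show ?thesis .
  qed
  have "(2*x0) powr be = 2 powr be * x0 powr be" using x0 by (simp add: powr_mult)
  hence "x0 powr be * (Q - x0/2) = 2 powr (-be) * ((2*x0) powr be * (Q - x0/2))"
    by (simp add: powr_minus field_simps)
  also have "\<dots> \<le> 2 powr (-be) * Q powr (be+1)" using key by simp
  finally show ?thesis .
qed

lemma poly54:
  fixes x0 x1 W Q :: real
  assumes "0 \<le> x1" "x1 \<le> x0" "x0 + x1 \<le> Q" "0 \<le> W" "W \<le> 2*x1" "W \<le> Q - x0"
  shows "(x0+x1)^2 + W*(2*Q - 2*x0 - x1) \<le> 5/4 * Q^2"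
proof -
  have nn: "0 \<le> 2*Q - 2*x0 - x1" using assms by linarith
  show ?thesis
  proof (cases "2*x1 \<le> Q - x0")
    case True
    have "W*(2*Q - 2*x0 - x1) \<le> 2*x1*(2*Q - 2*x0 - x1)" using assms nn by (intro mult_right_mono) auto
    moreover have "(x0+x1)^2 + 2*x1*(2*Q - 2*x0 - x1) \<le> 5/4 * Q^2"
    proof -
      define Q0 where "Q0 = x0 + 2*x1"
      have f1: "0 \<le> (Q-Q0)*(5/4*(Q+Q0)-4*x1)" using assms True by (intro mult_nonneg_nonneg) (auto simp: Q0_def)
      have f2: "0 \<le> x1*(x0-x1)" using assms by simp
      have id: "5/4 * Q^2 - ((x0+x1)^2 + 2*x1*(2*Q - 2*x0 - x1)) = (Q-Q0)*(5/4*(Q+Q0)-4*x1) + x0^2/4 + 3*(x1*(x0-x1)) + x1^2"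
        by (simp add: Q0_def power2_eq_square field_simps)
      have "0 \<le> x0^2" "0 \<le> x1^2" by simp_all
      thus ?thesis using id f1 f2 by linarith
    qed
    ultimately show ?thesis by linarith
  next
    case False
    have "W*(2*Q - 2*x0 - x1) \<le> (Q-x0)*(2*Q - 2*x0 - x1)" using assms nn by (intro mult_right_mono) auto
    moreover have "(x0+x1)^2 + (Q-x0)*(2*Q - 2*x0 - x1) \<le> 5/4 * Q^2"
    proof -
      define e where "e = Q - x0 - x1"
      have e0: "0 \<le> e" "e \<le> x1" using assms False by (auto simp: e_def)
      have f1: "0 \<le> (x0-x1)*(x0+3*x1)" using assms by simp
      have f2: "0 \<le> e*(x0-x1)" using assms e0 by simp
      have f3: "0 \<le> e*(x1-e)" using e0 by simp
      have f4: "0 \<le> e*x1" using e0 assms by simp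
      have id: "5/4 * Q^2 - ((x0+x1)^2 + (Q-x0)*(2*Q - 2*x0 - x1)) = (x0-x1)*(x0+3*x1)/4 + 5/2*(e*(x0-x1)) + 3/4*(e*(x1-e)) + 5/4*(e*x1)"
        by (simp add: e_def power2_eq_square field_simps)
      show ?thesis using id f1 f2 f3 f4 by linarith
    qed
    ultimately show ?thesis by linarith
  qed
qed

lemma sq_le_powr:
  fixes x mu p :: real
  assumes "0 \<le> x" "x \<le> mu" "0 < p" "p < 1"
  shows "x^2 \<le> mu powr (2-p) * x powr p"
proof (cases "x = 0")
  case True thus ?thesis by simp
next
  case False
  hence x: "x > 0" using assms by simp
  have "x^2 = x powr 2" using x by (simp add: powr_realpow)
  also have "\<dots> = x powr (2-p) * x powr p" by (simp flip: powr_add)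
  also have "\<dots> \<le> mu powr (2-p) * x powr p"
    by (intro mult_right_mono powr_mono2) (use assms in auto)
  finally show ?thesis .
qed

lemma mu_pow_id:
  fixes mu k p :: real
  assumes "0 \<le> mu" "0 < k" "0 < p" "p < 1"
  shows "mu powr (2-p) = k powr (1 - 2/p) * (k * mu powr p) powr (2/p - 1)"
proof -
  have "(k * mu powr p) powr (2/p - 1) = k powr (2/p - 1) * mu powr (p * (2/p-1))"
    using assms by (simp add: powr_mult powr_powr)
  also have "p * (2/p - 1) = 2 - p" using assms by (simp add: field_simps)
  finally have "k powr (1 - 2/p) * (k * mu powr p) powr (2/p - 1) = (k powr (1-2/p) * k powr (2/p-1)) * mu powr (2-p)"
    by simp
  also have "k powr (1-2/p) * k powr (2/p-1) = 1" using assms by (simp flip: powr_add)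
  finally show ?thesis by simp
qed

lemma seq_S1:
  fixes c :: "nat \<Rightarrow> real" and k l :: nat and p ga :: real
  assumes k: "k > 0" and l: "l > 0" and p: "0 < p" "p < 1" and ga: "0 \<le> ga"
    and nn: "\<And>i. 0 \<le> c i" and dec: "\<And>i j. i \<le> j \<Longrightarrow> j < l*k \<Longrightarrow> c j \<le> c i"
  shows "(\<Sum>i\<in>{k..<l*k}. (c i)^2) - ga * (\<Sum>i<k. (c i)^2)
     \<le> (1+ga) powr (1 - 2/p) * g_fun p * real k powr (1 - 2/p) * (\<Sum>i<l*k. c i powr p) powr (2/p)"
proof -
  define mu where "mu = c (k-1)"
  define Q where "Q = (\<Sum>i<l*k. c i powr p)"
  define P0 where "P0 = (\<Sum>i<k. c i powr p)"
  define X where "X = real k * mu powr p"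
  have mu0: "0 \<le> mu" using nn by (simp add: mu_def)
  have lk: "k \<le> l*k" using l by simp
  have split: "{..<l*k} = {..<k} \<union> {k..<l*k}" using lk by (auto intro: less_le_trans)
  have QP: "Q = P0 + (\<Sum>i\<in>{k..<l*k}. c i powr p)"
    unfolding Q_def P0_def split by (subst sum.union_disjoint) auto
  have tail_le: "\<And>i. i \<in> {k..<l*k} \<Longrightarrow> c i \<le> mu"
    unfolding mu_def using dec by auto
  have head_ge: "\<And>i. i < k \<Longrightarrow> mu \<le> c i"
  proof -
    fix i assume "i < k"
    hence "i \<le> k - 1" using k by auto
    moreover have "k - 1 < l*k" by (metis k lk diff_less less_le_trans zero_less_one)
    ultimately
    show "mu \<le> c i" unfolding mu_def by (rule dec)
  qed
  have t1: "(\<Sum>i\<in>{k..<l*k}. (c i)^2) \<le> (\<Sum>i\<in>{k..<l*k}. mu powr (2-p) * c i powr p)"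
    by (intro sum_mono sq_le_powr) (use nn tail_le p in auto)
  also have "\<dots> = mu powr (2-p) * (Q - P0)" using QP by (simp add: sum_distrib_left)
  finally have t1: "(\<Sum>i\<in>{k..<l*k}. (c i)^2) \<le> mu powr (2-p) * (Q - P0)" .
  have "X = (\<Sum>i<k. mu powr p)" by (simp add: X_def)
  also have "\<dots> \<le> P0" unfolding P0_def by (intro sum_mono powr_mono2) (use p mu0 head_ge in auto)
  finally have XP: "X \<le> P0" .
  have h1: "real k * mu^2 = (\<Sum>i<k. mu^2)" by simp
  also have "\<dots> \<le> (\<Sum>i<k. (c i)^2)" by (intro sum_mono power_mono) (use mu0 head_ge in auto)
  finally have h1: "real k * mu^2 \<le> (\<Sum>i<k. (c i)^2)" .
  have "(\<Sum>i\<in>{k..<l*k}. (c i)^2) - ga * (\<Sum>i<k. (c i)^2) \<le> mu powr (2-p) * (Q - X) - ga * (real k * mu^2)"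
  proof -
    have "mu powr (2-p) * (Q - P0) \<le> mu powr (2-p) * (Q - X)" using XP by (intro mult_left_mono) auto
    moreover have "ga * (real k * mu^2) \<le> ga * (\<Sum>i<k. (c i)^2)" using h1 ga by (intro mult_left_mono) auto
    ultimately show ?thesis using t1 by linarith
  qed
  also have "mu powr (2-p) * (Q - X) - ga * (real k * mu^2) = real k powr (1 - 2/p) * (X powr (2/p-1) * (Q - (1+ga)*X))"
  proof -
    have e1: "mu powr (2-p) = real k powr (1 - 2/p) * X powr (2/p - 1)"
      unfolding X_def by (rule mu_pow_id) (use mu0 k p in auto)
    have "real k * mu^2 = mu powr (2-p) * X"
    proof (cases "mu = 0")
      case True thus ?thesis by (simp add: X_def)
    next
      case False
      hence "mu > 0" using mu0 by simp
      hence "mu powr (2-p) * mu powr p = mu^2" by (simp flip: powr_add add: powr_realpow)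
      thus ?thesis by (simp add: X_def algebra_simps)
    qed
    thus ?thesis using e1 by (simp add: algebra_simps)
  qed
  also have "\<dots> \<le> real k powr (1 - 2/p) * ((1+ga) powr (1 - 2/p) * g_fun p * Q powr (2/p))"
    by (intro mult_left_mono amgm_g) (use p ga mu0 X_def Q_def in \<open>auto intro!: sum_nonneg\<close>)
  finally show ?thesis by (simp add: Q_def algebra_simps)
qed

lemma block_bound:
  fixes c :: "nat \<Rightarrow> real" and k l j :: nat and p :: real
  assumes k: "k > 0" and p: "0 < p" "p < 1" and j: "1 \<le> j" "j < l"
    and nn: "\<And>i. 0 \<le> c i" and dec: "\<And>i i'. i \<le> i' \<Longrightarrow> i' < l*k \<Longrightarrow> c i' \<le> c i"
  shows "(\<Sum>i\<in>{j*k..<j*k+k}. (c i)^2) \<le> ((\<Sum>i\<in>{(j-1)*k..<(j-1)*k+k}. c i powr p) / k) powr (2/p-1) * (\<Sum>i\<in>{j*k..<j*k+k}. c i powr p)"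
    and "(\<Sum>i\<in>{j*k..<j*k+k}. c i powr p) \<le> (\<Sum>i\<in>{(j-1)*k..<(j-1)*k+k}. c i powr p)"
proof -
  define mu where "mu = c (j*k - 1)"
  define P1 where "P1 = (\<Sum>i\<in>{(j-1)*k..<(j-1)*k+k}. c i powr p)"
  define P2 where "P2 = (\<Sum>i\<in>{j*k..<j*k+k}. c i powr p)"
  have mu0: "0 \<le> mu" using nn by (simp add: mu_def)
  have jk: "(j-1)*k + k = j*k" using j by (cases j) auto
  have jkl: "j*k + k \<le> l*k" using j by (metis add_mult_distrib mult_le_mono1 Suc_le_eq mult_Suc plus_1_eq_Suc add.commute)
  have kpos: "1 \<le> j*k" using j k by simp
  have up: "\<And>i. i \<in> {j*k..<j*k+k} \<Longrightarrow> c i \<le> mu"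
    unfolding mu_def using jkl by (intro dec) auto
  have lo: "\<And>i. i \<in> {(j-1)*k..<(j-1)*k+k} \<Longrightarrow> mu \<le> c i"
    unfolding mu_def using jk jkl kpos by (intro dec) auto
  have b: "(\<Sum>i\<in>{j*k..<j*k+k}. (c i)^2) \<le> (\<Sum>i\<in>{j*k..<j*k+k}. mu powr (2-p) * c i powr p)"
    by (intro sum_mono sq_le_powr) (use nn up p in auto)
  also have "\<dots> = mu powr (2-p) * P2" by (simp add: P2_def sum_distrib_left)
  finally have b: "(\<Sum>i\<in>{j*k..<j*k+k}. (c i)^2) \<le> mu powr (2-p) * P2" .
  have "real k * mu powr p = (\<Sum>i\<in>{(j-1)*k..<(j-1)*k+k}. mu powr p)" by simp
  also have "\<dots> \<le> P1" unfolding P1_def by (intro sum_mono powr_mono2) (use p mu0 lo in auto)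
  finally have m1: "real k * mu powr p \<le> P1" .
  have "P2 \<le> (\<Sum>i\<in>{j*k..<j*k+k}. mu powr p)" unfolding P2_def
    by (intro sum_mono powr_mono2) (use p nn up in auto)
  also have "\<dots> = real k * mu powr p" by simp
  finally have m2: "P2 \<le> real k * mu powr p" .
  show "P2 \<le> P1" using m1 m2 by (simp add: P1_def P2_def)
  have "mu powr (2-p) = (mu powr p) powr (2/p - 1)"
  proof -
    have "p*(2/p-1) = 2-p" using p by (simp add: field_simps)
    thus ?thesis by (simp add: powr_powr)
  qed
  also have "\<dots> \<le> (P1 / k) powr (2/p-1)"
    by (rule powr_mono2) (use p m1 k in \<open>auto simp: field_simps\<close>)
  finally have "mu powr (2-p) * P2 \<le> (P1 / k) powr (2/p-1) * P2"
    by (rule mult_right_mono) (auto simp: P2_def intro!: sum_nonneg)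
  thus "(\<Sum>i\<in>{j*k..<j*k+k}. (c i)^2) \<le> (P1 / k) powr (2/p-1) * P2" using b by linarith
qed

lemma dec_le:
  fixes x :: "nat \<Rightarrow> real"
  assumes "\<And>j. x (Suc j) \<le> x j" "i \<le> j"
  shows "x j \<le> x i"
  using assms(2)
proof (induction j)
  case 0 thus ?case by simp
next
  case (Suc j)
  thus ?case using assms(1)[of j] by (cases "i = Suc j") (auto simp: le_Suc_eq)
qed

lemma sum_split0:
  fixes x :: "nat \<Rightarrow> real"
  assumes "m < l"
  shows "(\<Sum>j\<in>{m..<l}. x j) = x m + (\<Sum>j\<in>{Suc m..<l}. x j)"
  using assms by (rule sum.atLeast_Suc_lessThan)

lemma sum_shift_prev:
  fixes x :: "nat \<Rightarrow> real"
  assumes "\<And>j. 0 \<le> x j" "1 \<le> m"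
  shows "(\<Sum>j\<in>{Suc m..<l}. x (j-1)) \<le> (\<Sum>j\<in>{m..<l}. x j)"
proof (cases "Suc m < l")
  case True
  then obtain l' where l': "l = Suc l'" by (cases l) auto
  have "(\<Sum>j\<in>{Suc m..<Suc l'}. x (j-1)) = (\<Sum>i\<in>{m..<l'}. x i)"
    by (subst sum.shift_bounds_Suc_ivl) simp
  also have "\<dots> \<le> (\<Sum>i\<in>{m..<Suc l'}. x i)"
    by (rule sum_mono2) (use assms in auto)
  finally show ?thesis using l' by simp
next
  case False
  hence "{Suc m..<l} = {}" by auto
  thus ?thesis using assms by (auto intro: sum_nonneg)
qed

lemma seq_a:
  fixes x :: "nat \<Rightarrow> real" and l :: nat and p Q :: real
  assumes nn: "\<And>j. 0 \<le> x j" and dec: "\<And>j. x (Suc j) \<le> x j" and l: "l > 0"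
    and Q: "(\<Sum>j<l. x j) = Q" and p: "1/2 \<le> p" "p < 1"
  shows "(\<Sum>j\<in>{1..<l}. sqrt (x (j-1) powr (2/p-1) * x j)) \<le> 2 powr (1-1/p) * Q powr (1/p)"
proof -
  define be where "be = 1/p - 1"
  have be: "0 \<le> be" "be \<le> 1" using p by (auto simp: be_def field_simps)
  have Q0: "Q = x 0 + (\<Sum>j\<in>{1..<l}. x j)"
    using Q sum_split0[of 0 l x] l by (simp add: atLeast0LessThan)
  have x0Q: "x 0 \<le> Q" using Q0 nn by (simp add: sum_nonneg)
  have termb: "sqrt (x (j-1) powr (2/p-1) * x j) \<le> x 0 powr be * ((x (j-1) + x j)/2)" for j
  proof -
    have "x (j-1) powr (2/p-1) = (x (j-1) powr be)^2 * x (j-1)"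
    proof -
      have e: "2/p - 1 = be + be + 1" by (simp add: be_def)
      have "x (j-1) powr (2/p-1) = x (j-1) powr be * x (j-1) powr be * x (j-1) powr 1"
        unfolding e powr_add by simp
      thus ?thesis using nn by (simp add: power2_eq_square)
    qed
    hence "sqrt (x (j-1) powr (2/p-1) * x j) = x (j-1) powr be * sqrt (x (j-1) * x j)"
      by (simp add: real_sqrt_mult mult.assoc)
    also have "\<dots> \<le> x 0 powr be * ((x (j-1) + x j)/2)"
      by (intro mult_mono powr_mono2 arith_geo_mean_sqrt dec_le[of x, OF dec]) (use nn be in auto)
    finally show ?thesis .
  qed
  have "(\<Sum>j\<in>{1..<l}. sqrt (x (j-1) powr (2/p-1) * x j)) \<le> (\<Sum>j\<in>{1..<l}. x 0 powr be * ((x (j-1) + x j)/2))"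
    by (intro sum_mono termb)
  also have "\<dots> = x 0 powr be * ((\<Sum>j\<in>{1..<l}. (x (j-1) + x j)) / 2)"
    by (simp add: sum_distrib_left sum_divide_distrib)
  also have "(\<Sum>j\<in>{1..<l}. (x (j-1) + x j)) = (\<Sum>j\<in>{1..<l}. x (j-1)) + (\<Sum>j\<in>{1..<l}. x j)"
    by (rule sum.distrib)
  also have "x 0 powr be * (((\<Sum>j\<in>{1..<l}. x (j-1)) + (\<Sum>j\<in>{1..<l}. x j)) / 2) \<le> x 0 powr be * ((Q + (Q - x 0)) / 2)"
  proof -
    have "(\<Sum>j\<in>{Suc 0..<l}. x (j-1)) \<le> (\<Sum>j\<in>{0..<l}. x j)"
    proof (cases l)
      case (Suc l')
      have "(\<Sum>j\<in>{Suc 0..<Suc l'}. x (j-1)) = (\<Sum>i\<in>{0..<l'}. x i)"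
        by (subst sum.shift_bounds_Suc_ivl) simp
      also have "\<dots> \<le> (\<Sum>i\<in>{0..<Suc l'}. x i)" by (rule sum_mono2) (use nn in auto)
      finally show ?thesis using Suc by simp
    qed (use l in simp)
    hence "(\<Sum>j\<in>{1..<l}. x (j-1)) \<le> Q" using Q by (simp add: atLeast0LessThan)
    moreover have "(\<Sum>j\<in>{1..<l}. x j) = Q - x 0" using Q0 by simp
    ultimately show ?thesis using nn by (intro divide_right_mono mult_left_mono) auto
  qed
  also have "x 0 powr be * ((Q + (Q - x 0)) / 2) = x 0 powr be * (Q - x 0 / 2)" by (simp add: field_simps)
  also have "\<dots> \<le> 2 powr (-be) * Q powr (be+1)" by (rule half_bound) (use nn x0Q be in auto)
  also have "\<dots> = 2 powr (1-1/p) * Q powr (1/p)" by (simp add: be_def)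
  finally show ?thesis .
qed

lemma seq_b:
  fixes x :: "nat \<Rightarrow> real" and l :: nat and p Q :: real
  assumes nn: "\<And>j. 0 \<le> x j" and dec: "\<And>j. x (Suc j) \<le> x j" and l: "l > 0"
    and pad: "\<And>j. l \<le> j \<Longrightarrow> x j = 0"
    and Q: "(\<Sum>j<l. x j) = Q" and p: "0 < p" "p < 1/2"
  shows "(\<Sum>j\<in>{1..<l}. sqrt (x (j-1) powr (2/p-1) * x j)) \<le> 5/4 * sqrt (g_fun p) * Q powr (1/p)"
proof -
  define r where "r = 1/p"
  have r2: "r > 2" using p by (simp add: r_def field_simps)
  have p1: "p < 1" using p by simp
  have termb: "sqrt (x (j-1) powr (2/p-1) * x j) \<le> sqrt (g_fun p) * (x (j-1) + x j) powr r" for j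
  proof -
    have "x (j-1) powr (2/p-1) * ((x (j-1) + x j) - 1 * x (j-1)) \<le> 1 powr (1 - 2/p) * g_fun p * (x (j-1) + x j) powr (2/p)"
      by (rule amgm_g) (use p1 p nn in \<open>auto intro: add_nonneg_nonneg\<close>)
    hence "x (j-1) powr (2/p-1) * x j \<le> g_fun p * (x (j-1) + x j) powr (2/p)" by simp
    hence "sqrt (x (j-1) powr (2/p-1) * x j) \<le> sqrt (g_fun p * (x (j-1) + x j) powr (2/p))"
      by (rule real_sqrt_le_mono)
    also have "\<dots> = sqrt (g_fun p) * sqrt ((x (j-1) + x j) powr (2/p))" by (simp add: real_sqrt_mult)
    also have "sqrt ((x (j-1) + x j) powr (2/p)) = (x (j-1) + x j) powr r"
      using powr_half_sqrt_powr[of "x (j-1) + x j" "2/p"] nn by (simp add: r_def add_nonneg_nonneg)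
    finally show ?thesis .
  qed
  have g0: "0 \<le> g_fun p" using g_nonneg[OF p(1) p1] .
  have Qsplit: "Q = x 0 + (\<Sum>j\<in>{1..<l}. x j)"
    using Q sum_split0[of 0 l x] l by (simp add: atLeast0LessThan)
  have Qge: "x 0 + x 1 + x 2 \<le> Q"
  proof -
    have "(\<Sum>j<3. x j) = (\<Sum>j\<in>{..<3} \<inter> {..<l}. x j)"
      apply (rule sum.mono_neutral_right)
      apply auto
      by (metis not_le pad)
    also have "\<dots> \<le> (\<Sum>j<l. x j)" by (rule sum_mono2) (use nn in auto)
    finally have "(\<Sum>j<3. x j) \<le> Q" using Q by simp
    moreover have "(\<Sum>j<3. x j) = x 0 + x 1 + x 2" by (simp add: numeral_3_eq_3 numeral_2_eq_2)
    ultimately show ?thesis by linarith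
  qed
  have main: "(\<Sum>j\<in>{1..<l}. (x (j-1) + x j) powr r) \<le> 5/4 * Q powr r"
  proof (cases "l = 1")
    case True
    thus ?thesis using Q nn by (simp add: sum_nonneg)
  next
    case False
    hence l2: "1 < l" using l by simp
    define W where "W = x 1 + x 2"
    have x10: "x 1 \<le> x 0" using dec[of 0] by simp
    have x21: "x 2 \<le> x 1" using dec[of 1] by (simp add: numeral_2_eq_2)
    have W0: "0 \<le> W" using nn by (simp add: W_def)
    have WQ: "W \<le> Q - x 0" using Qge by (simp add: W_def)
    have Qnn: "0 \<le> Q" using Qge nn[of 0] nn[of 1] nn[of 2] by linarith
    have s1: "(\<Sum>j\<in>{1..<l}. (x (j-1) + x j) powr r) = (x 0 + x 1) powr r + (\<Sum>j\<in>{2..<l}. (x (j-1) + x j) powr r)"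
      using sum_split0[of 1 l "\<lambda>j. (x (j-1) + x j) powr r"] l2 by (simp add: numeral_2_eq_2)
    have s2: "(\<Sum>j\<in>{2..<l}. (x (j-1) + x j) powr r) \<le> (\<Sum>j\<in>{2..<l}. (x (j-1) + x j) * W powr (r-1))"
    proof (rule sum_mono)
      fix j assume j: "j \<in> {2..<l}"
      have a0: "0 \<le> x (j-1) + x j" using nn by (simp add: add_nonneg_nonneg)
      have aW: "x (j-1) + x j \<le> W"
      proof -
        have "x (j-1) \<le> x 1" using j by (intro dec_le[of x, OF dec]) auto
        moreover have "x j \<le> x 2" using j by (intro dec_le[of x, OF dec]) auto
        ultimately show ?thesis by (simp add: W_def)
      qed
      have "(x (j-1) + x j) powr r = (x (j-1) + x j) powr 1 * (x (j-1) + x j) powr (r-1)"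
        using powr_add[of "x (j-1) + x j" 1 "r-1"] by simp
      also have "\<dots> \<le> (x (j-1) + x j) * W powr (r-1)"
      proof -
        have pm: "(x (j-1) + x j) powr (r-1) \<le> W powr (r-1)" by (rule powr_mono2) (use a0 aW r2 in auto)
        have "(x (j-1) + x j) powr 1 = x (j-1) + x j" using a0 by simp
        thus ?thesis using mult_left_mono[OF pm a0] by simp
      qed
      finally show "(x (j-1) + x j) powr r \<le> (x (j-1) + x j) * W powr (r-1)" .
    qed
    have s3: "(\<Sum>j\<in>{2..<l}. (x (j-1) + x j)) \<le> 2*Q - 2*x 0 - x 1"
    proof -
      have "(\<Sum>j\<in>{Suc 1..<l}. x (j-1)) \<le> (\<Sum>j\<in>{1..<l}. x j)" by (rule sum_shift_prev) (use nn in auto)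
      moreover have "(\<Sum>j\<in>{1..<l}. x j) = x 1 + (\<Sum>j\<in>{2..<l}. x j)"
        using sum_split0[of 1 l x] l2 by (simp add: numeral_2_eq_2)
      ultimately show ?thesis using Qsplit by (simp add: sum.distrib numeral_2_eq_2)
    qed
    have "(\<Sum>j\<in>{1..<l}. (x (j-1) + x j) powr r) \<le> (x 0 + x 1) powr r + W powr (r-1) * (2*Q - 2*x 0 - x 1)"
    proof -
      have "(\<Sum>j\<in>{2..<l}. (x (j-1) + x j) * W powr (r-1)) = W powr (r-1) * (\<Sum>j\<in>{2..<l}. (x (j-1) + x j))"
        by (simp add: sum_distrib_left mult.commute)
      also have "\<dots> \<le> W powr (r-1) * (2*Q - 2*x 0 - x 1)" using s3 by (intro mult_left_mono) auto
      finally show ?thesis using s1 s2 by linarith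
    qed
    also have "\<dots> \<le> 5/4 * Q powr r"
    proof (cases "Q = 0")
      case True
      hence "x 0 = 0" "x 1 = 0" "W = 0" using Qge nn[of 0] nn[of 1] nn[of 2] W0 WQ by (auto simp: W_def)
      thus ?thesis using True r2 by simp
    next
      case False
      hence Qp: "Q > 0" using Qnn by simp
      have e1: "(x 0 + x 1) powr r \<le> (x 0 + x 1)^2 * Q powr (r-2)"
      proof -
        have a0: "0 \<le> x 0 + x 1" using nn by (simp add: add_nonneg_nonneg)
        have "(x 0 + x 1) powr r = (x 0 + x 1) powr 2 * (x 0 + x 1) powr (r-2)" using powr_add[of "x 0 + x 1" 2 "r-2"] by simp
        also have "\<dots> \<le> (x 0 + x 1) powr 2 * Q powr (r-2)"
          using Qge nn[of 2] a0 r2 by (intro mult_left_mono powr_mono2) auto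
        also have "(x 0 + x 1) powr 2 = (x 0 + x 1)^2" using a0 by (simp add: powr_realpow')
        finally show ?thesis .
      qed
      have e2: "W powr (r-1) \<le> W * Q powr (r-2)"
      proof -
        have "W powr (r-1) = W powr 1 * W powr (r-2)" using powr_add[of W 1 "r-2"] by simp
        also have "\<dots> \<le> W * Q powr (r-2)"
        proof -
          have pm: "W powr (r-2) \<le> Q powr (r-2)" by (rule powr_mono2) (use W0 WQ nn[of 0] r2 in auto)
          have "W powr 1 = W" using W0 by simp
          thus ?thesis using mult_left_mono[OF pm W0] by simp
        qed
        finally show ?thesis .
      qed
      have nnn: "0 \<le> 2*Q - 2*x 0 - x 1" using Qge nn[of 2] nn[of 1] x10 by linarith
      have "(x 0 + x 1) powr r + W powr (r-1) * (2*Q - 2*x 0 - x 1)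
          \<le> Q powr (r-2) * ((x 0 + x 1)^2 + W * (2*Q - 2*x 0 - x 1))"
      proof -
        have "Q powr (r-2) * ((x 0 + x 1)^2 + W * (2*Q - 2*x 0 - x 1)) = (x 0 + x 1)^2 * Q powr (r-2) + W * Q powr (r-2) * (2*Q - 2*x 0 - x 1)"
          by (simp add: algebra_simps)
        thus ?thesis using e1 mult_right_mono[OF e2 nnn] by linarith
      qed
      also have "\<dots> \<le> Q powr (r-2) * (5/4 * Q^2)"
      proof -
        have a1: "0 \<le> x 1" by (rule nn)
        have a3: "x 0 + x 1 \<le> Q" using Qge nn[of 2] by linarith
        have a5: "W \<le> 2 * x 1" using x21 by (simp add: W_def)
        show ?thesis using poly54[OF a1 x10 a3 W0 a5 WQ] by (intro mult_left_mono) auto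
      qed
      also have "\<dots> = 5/4 * Q powr r"
      proof -
        have q2: "Q powr 2 = Q^2" using Qp by (simp add: powr_realpow')
        have "Q powr (r-2) * Q powr 2 = Q powr r" using powr_add[of Q "r-2" 2] by simp
        hence "Q powr (r-2) * Q^2 = Q powr r" using q2 by simp
        thus ?thesis by simp
      qed
      finally show ?thesis .
    qed
    finally show ?thesis .
  qed
  have "(\<Sum>j\<in>{1..<l}. sqrt (x (j-1) powr (2/p-1) * x j)) \<le> (\<Sum>j\<in>{1..<l}. sqrt (g_fun p) * (x (j-1) + x j) powr r)"
    by (intro sum_mono termb)
  also have "\<dots> = sqrt (g_fun p) * (\<Sum>j\<in>{1..<l}. (x (j-1) + x j) powr r)" by (simp add: sum_distrib_left)
  also have "\<dots> \<le> sqrt (g_fun p) * (5/4 * Q powr r)" using main g0 by (intro mult_left_mono) auto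
  finally show ?thesis by (simp add: r_def)
qed

definition fst_fun :: "real \<Rightarrow> real" where
  "fst_fun p = ln (p/2) + (2/p - 1) * ln (2 - p)"

lemma phi_eq:
  assumes "0 < p" "p < 2"
  shows "(p / 2) powr (1/2) * (2 - p) powr (1 / p - 1/2) = exp (fst_fun p / 2)"
proof -
  have "(p / 2) powr (1/2) * (2 - p) powr (1 / p - 1/2) = exp (1/2 * ln (p/2)) * exp ((1/p - 1/2) * ln (2-p))"
    using assms by (simp add: powr_def)
  also have "\<dots> = exp (1/2 * ln (p/2) + (1/p - 1/2) * ln (2-p))" by (simp add: exp_add)
  also have "1/2 * ln (p/2) + (1/p - 1/2) * ln (2-p) = fst_fun p / 2"
    by (simp add: fst_fun_def field_simps)
  finally show ?thesis .
qed

lemma fst_deriv: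
  assumes "0 < x" "x < 2"
  shows "DERIV fst_fun x :> (- 2 * ln (2 - x) / x^2)"
proof -
  have d1: "DERIV (\<lambda>p. ln (p/2)) x :> 1/x" using assms
    by (auto intro!: derivative_eq_intros)
  have d2: "DERIV (\<lambda>p. 2/p - 1) x :> -2/x^2" using assms
    by (auto intro!: derivative_eq_intros simp: power2_eq_square)
  have d3: "DERIV (\<lambda>p. ln (2 - p)) x :> -1/(2-x)" using assms
    by (auto intro!: derivative_eq_intros)
  have "DERIV (\<lambda>p. ln (p/2) + (2/p - 1) * ln (2 - p)) x :> 1/x + (-2/x^2 * ln (2 - x) + (-1/(2-x)) * (2/x - 1))"
    by (intro DERIV_add DERIV_mult d1 d2 d3)
  moreover have "1/x + (-2/x^2 * ln (2 - x) + (-1/(2-x)) * (2/x - 1)) = - 2 * ln (2 - x) / x^2"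
  proof -
    have "(-1/(2-x)) * (2/x - 1) = - 1/x" using assms by (simp add: field_simps)
    thus ?thesis by simp
  qed
  ultimately show ?thesis unfolding fst_fun_def[abs_def] by simp
qed
lemma fst_cont: "0 < a \<Longrightarrow> b < 2 \<Longrightarrow> continuous_on {a..b} fst_fun"
proof (rule DERIV_atLeastAtMost_imp_continuous_on)
  fix x assume "0 < a" "b < 2" "a \<le> x" "x \<le> b"
  hence "0 < x" "x < 2" by auto
  thus "\<exists>y. DERIV fst_fun x :> y" using fst_deriv by blast
qed

lemma fst_strict_dec:
  assumes "0 < a" "a < b" "b \<le> 1"
  shows "fst_fun b < fst_fun a"
proof (rule DERIV_neg_imp_decreasing_open[OF assms(2)])
  fix x assume x: "a < x" "x < b"
  have "ln (2 - x) > 0" using x assms by simp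
  hence "- 2 * ln (2 - x) / x^2 < 0" using x assms by (simp add: divide_neg_pos)
  thus "\<exists>y. DERIV fst_fun x :> y \<and> y < 0" using fst_deriv[of x] x assms by auto
next
  show "continuous_on {a..b} fst_fun" using assms by (intro fst_cont) auto
qed

lemma fst_quarter: "fst_fun (1/4) > 0"
proof -
  have "fst_fun (1/4) = ln (1/8) + 7 * ln (7/4)" by (simp add: fst_fun_def)
  also have "7 * ln (7/4::real) = ln ((7/4)^7)" by (simp add: ln_realpow)
  also have "ln (1/8::real) + ln ((7/4)^7) = ln ((7/4)^7 / 8)" by (simp add: ln_div)
  finally show ?thesis by (simp add: power_divide)
qed

lemma fst_half: "fst_fun (1/2) < 0"
proof -
  have "fst_fun (1/2) = ln (1/4) + 3 * ln (3/2)" by (simp add: fst_fun_def)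
  also have "3 * ln (3/2::real) = ln ((3/2)^3)" by (simp add: ln_realpow)
  also have "ln (1/4::real) + ln ((3/2)^3) = ln ((3/2)^3 / 4)" by (simp add: ln_div)
  finally show ?thesis by (simp add: power_divide)
qed

lemma p_star_char: "0 < p_star \<and> p_star < 1/2 \<and> fst_fun p_star = 0"
proof -
  have eq: "\<And>p. 0 < p \<Longrightarrow> p \<le> 1 \<Longrightarrow> ((p / 2) powr (1/2) * (2 - p) powr (1 / p - 1/2) = 1 \<longleftrightarrow> fst_fun p = 0)"
    by (simp add: phi_eq)
  obtain p0 where p0: "1/4 \<le> p0" "p0 \<le> 1/2" "fst_fun p0 = 0"
    using IVT2'[of fst_fun "1/2" 0 "1/4"] fst_half fst_quarter fst_cont[of "1/4" "1/2"] by force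
  have uniq: "\<And>p. 0 < p \<Longrightarrow> p \<le> 1 \<Longrightarrow> fst_fun p = 0 \<Longrightarrow> p = p0"
  proof -
    fix p assume p: "0 < p" "p \<le> 1" "fst_fun p = 0"
    show "p = p0"
    proof (rule ccontr)
      assume "p \<noteq> p0"
      hence "p < p0 \<or> p0 < p" by auto
      thus False
      proof
        assume "p < p0" thus False using fst_strict_dec[of p p0] p p0 by simp
      next
        assume "p0 < p" thus False using fst_strict_dec[of p0 p] p p0 by simp
      qed
    qed
  qed
  have ex1: "\<exists>!p::real. 0 < p \<and> p \<le> 1 \<and> (p / 2) powr (1/2) * (2 - p) powr (1 / p - 1/2) = 1"
    using p0 uniq eq by (intro ex1I[of _ p0]) auto
  have ps: "0 < p_star \<and> p_star \<le> 1 \<and> (p_star / 2) powr (1/2) * (2 - p_star) powr (1 / p_star - 1/2) = 1"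
    unfolding p_star_def by (rule theI'[OF ex1])
  hence "p_star = p0" using uniq eq by auto
  moreover have "p0 \<noteq> 1/2"
  proof
    assume "p0 = 1/2" thus False using p0(3) fst_half by (metis less_irrefl)
  qed
  ultimately show ?thesis using p0 ps by auto
qed

lemma g_le_above_pstar:
  assumes "p_star < p" "p < 1"
  shows "g_fun p \<le> 2 powr (1 - 2/p)"
proof -
  have ps: "0 < p_star" "fst_fun p_star = 0" using p_star_char by auto
  have p0: "0 < p" using assms ps by simp
  have "fst_fun p < 0" using fst_strict_dec[of p_star p] assms ps by simp
  hence e: "exp (fst_fun p) < 1" by simp
  have "exp (fst_fun p) = (p/2) * (2-p) powr (2/p - 1)"
    using p0 assms by (simp add: fst_fun_def exp_add powr_def)
  hence lt: "(p/2) * (2-p) powr (2/p - 1) \<le> 1" using e by linarith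
  have "g_fun p = (p/2) * (2-p) powr (2/p - 1) * 2 powr (1 - 2/p)"
  proof -
    have e: "(2-p)/2 = 1 - p/2" by simp
    have "(1 - p/2) powr (2/p-1) = ((2-p)/2) powr (2/p-1)" by (simp only: e)
    also have "\<dots> = (2-p) powr (2/p-1) / 2 powr (2/p-1)"
      by (rule powr_divide)
    finally have "(1 - p/2) powr (2/p-1) = (2-p) powr (2/p-1) / 2 powr (2/p-1)" .
    moreover have "1 / 2 powr (2/p-1) = (2::real) powr (1 - 2/p)"
      using powr_minus[of "2::real" "2/p-1"] by (simp add: divide_inverse)
    ultimately have "(1 - p/2) powr (2/p-1) = (2-p) powr (2/p-1) * 2 powr (1 - 2/p)"
      by (metis times_divide_eq_right mult.right_neutral)
    thus ?thesis unfolding g_fun_def by (simp only: mult.assoc)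
  qed
  also have "\<dots> \<le> 1 * 2 powr (1 - 2/p)" using lt by (intro mult_right_mono) auto
  finally show ?thesis by simp
qed

definition sqs :: "nat \<Rightarrow> (nat \<Rightarrow> real) \<Rightarrow> real" where
  "sqs n z = (\<Sum>i<n. (z i)^2)"

definition ipm :: "nat \<Rightarrow> (nat \<Rightarrow> real) \<Rightarrow> (nat \<Rightarrow> real) \<Rightarrow> real" where
  "ipm m u v = (\<Sum>i<m. u i * v i)"

lemma sqs_nonneg: "0 \<le> sqs n z" by (simp add: sqs_def sum_nonneg)

lemma norm2_sqs: "norm2 n z = sqrt (sqs n z)" by (simp add: norm2_def sqs_def)

lemma norm2_sq: "(norm2 n z)^2 = sqs n z" by (simp add: norm2_sqs sqs_nonneg)

lemma mat_vec_lin: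
  "mat_vec m n A (\<lambda>i. a * u i + b * v i) = (\<lambda>i. a * mat_vec m n A u i + b * mat_vec m n A v i)"
  by (auto simp: mat_vec_def sum.distrib sum_distrib_left algebra_simps)

lemma mat_vec_add:
  "mat_vec m n A (\<lambda>i. u i + v i) = (\<lambda>i. mat_vec m n A u i + mat_vec m n A v i)"
  by (auto simp: mat_vec_def sum.distrib algebra_simps)

lemma mat_vec_cong: "(\<And>i. i < n \<Longrightarrow> u i = v i) \<Longrightarrow> mat_vec m n A u = mat_vec m n A v"
  by (auto simp: mat_vec_def intro!: sum.cong)

lemma mat_vec_zero: "(\<And>i. i < n \<Longrightarrow> u i = 0) \<Longrightarrow> mat_vec m n A u = (\<lambda>i. 0)"
  by (auto simp: mat_vec_def)

lemma mat_vec_sum: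
  assumes "finite J"
  shows "mat_vec m n A (\<lambda>i. \<Sum>j\<in>J. t j i) = (\<lambda>i. \<Sum>j\<in>J. mat_vec m n A (t j) i)"
  using assms by (auto simp: mat_vec_def sum_distrib_left intro!: sum.swap)

lemma sqs_zero: "sqs n z = 0 \<Longrightarrow> i < n \<Longrightarrow> z i = 0"
  unfolding sqs_def by (subst (asm) sum_nonneg_eq_0_iff) auto

lemma sqs_lin: "sqs m (\<lambda>i. a * X i + b * Y i) = a^2 * sqs m X + 2*a*b * ipm m X Y + b^2 * sqs m Y"
  by (simp add: sqs_def ipm_def power2_eq_square sum.distrib sum_distrib_left algebra_simps)

lemma sqs_disj:
  assumes "\<And>i. u i * v i = 0"
  shows "sqs n (\<lambda>i. a * u i + b * v i) = a^2 * sqs n u + b^2 * sqs n v"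
proof -
  have "ipm n u v = 0" unfolding ipm_def by (rule sum.neutral) (use assms in auto)
  thus ?thesis by (simp add: sqs_lin)
qed

lemma sparse_sub:
  assumes "\<And>i. i < n \<Longrightarrow> z i \<noteq> 0 \<Longrightarrow> i \<in> S" "finite S" "card S \<le> s"
  shows "Defs.sparse n s z"
proof -
  have "{i. i < n \<and> z i \<noteq> 0} \<subseteq> S" using assms by auto
  hence "card {i. i < n \<and> z i \<noteq> 0} \<le> card S" using assms by (intro card_mono) auto
  thus ?thesis using assms by (simp add: Defs.sparse_def)
qed

lemma sparse_mono: "Defs.sparse n s z \<Longrightarrow> s \<le> s' \<Longrightarrow> Defs.sparse n s' z"
  by (simp add: Defs.sparse_def)

lemma sparse_comb:
  assumes "Defs.sparse n k u" "Defs.sparse n k v"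
  shows "Defs.sparse n (2*k) (\<lambda>i. a * u i + b * v i)"
proof (rule sparse_sub)
  let ?S = "{i. i < n \<and> u i \<noteq> 0} \<union> {i. i < n \<and> v i \<noteq> 0}"
  show "finite ?S" by auto
  show "\<And>i. i < n \<Longrightarrow> a * u i + b * v i \<noteq> 0 \<Longrightarrow> i \<in> ?S" by auto
  have "card ?S \<le> card {i. i < n \<and> u i \<noteq> 0} + card {i. i < n \<and> v i \<noteq> 0}" by (rule card_Un_le)
  thus "card ?S \<le> 2*k" using assms by (simp add: Defs.sparse_def)
qed

lemma ric_rip:
  fixes A :: "nat \<Rightarrow> nat \<Rightarrow> real"
  assumes "Defs.sparse n s z"
  shows "(1 - ric m n A s) * sqs n z \<le> sqs m (mat_vec m n A z) \<and> sqs m (mat_vec m n A z) \<le> (1 + ric m n A s) * sqs n z"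
proof -
  define D where "D = {\<delta>. \<forall>z. Defs.sparse n s z \<longrightarrow>
      (1 - \<delta>) * (norm2 n z)\<^sup>2 \<le> (norm2 m (mat_vec m n A z))\<^sup>2 \<and>
      (norm2 m (mat_vec m n A z))\<^sup>2 \<le> (1 + \<delta>) * (norm2 n z)\<^sup>2}"
  have ric: "ric m n A s = Inf D" by (simp add: ric_def D_def)
  define M where "M = (\<Sum>i<m. \<Sum>j<n. (A i j)^2)"
  have M0: "0 \<le> M" by (simp add: M_def sum_nonneg)
  have upper: "sqs m (mat_vec m n A w) \<le> M * sqs n w" for w
  proof -
    have "sqs m (mat_vec m n A w) = (\<Sum>i<m. (\<Sum>j<n. A i j * w j)^2)"
      by (simp add: sqs_def mat_vec_def)
    also have "\<dots> \<le> (\<Sum>i<m. (\<Sum>j<n. (A i j)^2) * (\<Sum>j<n. (w j)^2))"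
      by (intro sum_mono Cauchy_Schwarz_ineq_sum)
    also have "\<dots> = M * sqs n w" by (simp add: M_def sqs_def sum_distrib_right)
    finally show ?thesis .
  qed
  have "1 + M \<in> D"
    unfolding D_def
  proof (intro CollectI allI impI conjI)
    fix w :: "nat \<Rightarrow> real"
    show "(1 - (1+M)) * (norm2 n w)\<^sup>2 \<le> (norm2 m (mat_vec m n A w))\<^sup>2"
      using M0 mult_nonneg_nonneg[OF M0 sqs_nonneg[of n w]] sqs_nonneg[of m "mat_vec m n A w"] by (simp add: norm2_sq)
    show "(norm2 m (mat_vec m n A w))\<^sup>2 \<le> (1 + (1+M)) * (norm2 n w)\<^sup>2"
      using upper[of w] sqs_nonneg[of n w] by (simp add: norm2_sq) (smt (verit) mult_right_mono)
  qed
  hence Dne: "D \<noteq> {}" by auto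
  show ?thesis
  proof (cases "sqs n z = 0")
    case True
    hence "mat_vec m n A z = (\<lambda>i. 0)" using sqs_zero by (intro mat_vec_zero) auto
    thus ?thesis using True by (simp add: sqs_def)
  next
    case False
    hence a: "sqs n z > 0" using sqs_nonneg[of n z] by simp
    define b where "b = sqs m (mat_vec m n A z)"
    have all: "1 - b / sqs n z \<le> d \<and> b / sqs n z - 1 \<le> d" if "d \<in> D" for d
    proof -
      have "(1 - d) * sqs n z \<le> b \<and> b \<le> (1 + d) * sqs n z"
        using that assms unfolding D_def b_def by (auto simp: norm2_sq)
      thus ?thesis using a by (simp add: field_simps)
    qed
    have l1: "1 - b / sqs n z \<le> Inf D" by (rule cInf_greatest[OF Dne]) (use all in auto)
    have l2: "b / sqs n z - 1 \<le> Inf D" by (rule cInf_greatest[OF Dne]) (use all in auto)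
    from l1 l2 a show ?thesis unfolding ric b_def[symmetric] by (simp add: field_simps)
  qed
qed

lemma ipm_CS: "\<bar>ipm m X Y\<bar> \<le> sqrt (sqs m X) * sqrt (sqs m Y)"
proof -
  have "(ipm m X Y)^2 \<le> sqs m X * sqs m Y"
    unfolding ipm_def sqs_def by (rule Cauchy_Schwarz_ineq_sum)
  hence "sqrt ((ipm m X Y)^2) \<le> sqrt (sqs m X * sqs m Y)" by (rule real_sqrt_le_mono)
  thus ?thesis by (simp add: real_sqrt_mult)
qed

lemma norm2_diff_le: "norm2 m (\<lambda>i. X i - Y i) \<le> norm2 m X + norm2 m Y"
proof -
  have "sqs m (\<lambda>i. X i - Y i) = sqs m X - 2 * ipm m X Y + sqs m Y"
    using sqs_lin[of m 1 X "-1" Y] by simp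
  also have "\<dots> \<le> sqs m X + 2 * (sqrt (sqs m X) * sqrt (sqs m Y)) + sqs m Y"
    using ipm_CS[of m X Y] by linarith
  also have "\<dots> = (sqrt (sqs m X) + sqrt (sqs m Y))^2"
    by (simp add: power2_eq_square sqs_nonneg algebra_simps real_sqrt_mult_self)
  finally have "sqs m (\<lambda>i. X i - Y i) \<le> (sqrt (sqs m X) + sqrt (sqs m Y))^2" by simp
  hence "sqrt (sqs m (\<lambda>i. X i - Y i)) \<le> sqrt ((sqrt (sqs m X) + sqrt (sqs m Y))^2)"
    by (rule real_sqrt_le_mono)
  thus ?thesis by (simp add: norm2_sqs sqs_nonneg)
qed

lemma polar:
  fixes A :: "nat \<Rightarrow> nat \<Rightarrow> real" and u v :: "nat \<Rightarrow> real"
  assumes rip: "\<And>z. Defs.sparse n (2*k) z \<Longrightarrow> (1-\<delta>) * sqs n z \<le> sqs m (mat_vec m n A z) \<and> sqs m (mat_vec m n A z) \<le> (1+\<delta>) * sqs n z"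
    and disj: "\<And>i. u i * v i = 0" and su: "Defs.sparse n k u" and sv: "Defs.sparse n k v"
  shows "\<bar>ipm m (mat_vec m n A u) (mat_vec m n A v)\<bar> \<le> \<delta> * sqrt (sqs n u) * sqrt (sqs n v)"
proof -
  define Nu where "Nu = sqrt (sqs n u)"
  define Nv where "Nv = sqrt (sqs n v)"
  define ip where "ip = ipm m (mat_vec m n A u) (mat_vec m n A v)"
  define Su where "Su = sqs m (mat_vec m n A u)"
  define Sv where "Sv = sqs m (mat_vec m n A v)"
  have Nu2: "Nu^2 = sqs n u" by (simp add: Nu_def sqs_nonneg)
  have Nv2: "Nv^2 = sqs n v" by (simp add: Nv_def sqs_nonneg)
  show ?thesis
  proof (cases "Nu = 0 \<or> Nv = 0")
    case True
    then consider "sqs n u = 0" | "sqs n v = 0" using Nu2 Nv2 by fastforce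
    thus ?thesis
    proof cases
      case 1
      hence "mat_vec m n A u = (\<lambda>i. 0)" by (intro mat_vec_zero sqs_zero)
      thus ?thesis using 1 by (simp add: ipm_def)
    next
      case 2
      hence "mat_vec m n A v = (\<lambda>i. 0)" by (intro mat_vec_zero sqs_zero)
      thus ?thesis using 2 by (simp add: ipm_def)
    qed
  next
    case False
    hence pos: "Nu > 0" "Nv > 0" using Nu_def Nv_def sqs_nonneg[of n u] sqs_nonneg[of n v] by auto
    have key: "(1-\<delta>)*(2*(Nu^2*Nv^2)) \<le> Nv^2*Su + 2*Nv*b*ip + b^2*Sv \<and> Nv^2*Su + 2*Nv*b*ip + b^2*Sv \<le> (1+\<delta>)*(2*(Nu^2*Nv^2))"
      if b: "b^2 = Nu^2" for b
    proof -
      have sp: "Defs.sparse n (2*k) (\<lambda>i. Nv * u i + b * v i)" by (rule sparse_comb[OF su sv])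
      have "sqs n (\<lambda>i. Nv * u i + b * v i) = Nv^2 * sqs n u + b^2 * sqs n v" by (rule sqs_disj[OF disj])
      also have "\<dots> = 2*(Nu^2*Nv^2)" using b Nu2 Nv2 by simp
      finally have e1: "sqs n (\<lambda>i. Nv * u i + b * v i) = 2*(Nu^2*Nv^2)" .
      have e2: "sqs m (mat_vec m n A (\<lambda>i. Nv * u i + b * v i)) = Nv^2*Su + 2*Nv*b*ip + b^2*Sv"
        by (simp add: mat_vec_lin sqs_lin Su_def Sv_def ip_def)
      show ?thesis using rip[OF sp] unfolding e1 e2 .
    qed
    have kp: "(1-\<delta>)*(2*(Nu^2*Nv^2)) \<le> Nv^2*Su + 2*Nv*Nu*ip + Nu^2*Sv \<and> Nv^2*Su + 2*Nv*Nu*ip + Nu^2*Sv \<le> (1+\<delta>)*(2*(Nu^2*Nv^2))"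
      using key[of Nu] by simp
    have km: "(1-\<delta>)*(2*(Nu^2*Nv^2)) \<le> Nv^2*Su - 2*Nv*Nu*ip + Nu^2*Sv \<and> Nv^2*Su - 2*Nv*Nu*ip + Nu^2*Sv \<le> (1+\<delta>)*(2*(Nu^2*Nv^2))"
      using key[of "-Nu"] by simp
    have pp: "0 < Nu*Nv" using pos by simp
    have "(Nu*Nv)*ip \<le> (Nu*Nv)*(\<delta>*Nu*Nv)" using kp km by (simp add: power2_eq_square algebra_simps)
    hence up: "ip \<le> \<delta>*Nu*Nv" using pp by (rule mult_left_le_imp_le)
    have "(Nu*Nv)*(-ip) \<le> (Nu*Nv)*(\<delta>*Nu*Nv)" using kp km by (simp add: power2_eq_square algebra_simps)
    hence lo: "-ip \<le> \<delta>*Nu*Nv" using pp by (rule mult_left_le_imp_le)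
    show ?thesis using up lo by (simp add: ip_def Nu_def Nv_def abs_le_iff)
  qed
qed

lemma sqs_sum_expand:
  assumes "finite J"
  shows "sqs m (\<lambda>i. \<Sum>j\<in>J. X j i) = (\<Sum>j\<in>J. \<Sum>j'\<in>J. ipm m (X j) (X j'))"
proof -
  have "sqs m (\<lambda>i. \<Sum>j\<in>J. X j i) = (\<Sum>i<m. \<Sum>j\<in>J. \<Sum>j'\<in>J. X j i * X j' i)"
    by (simp add: sqs_def power2_eq_square sum_product)
  also have "\<dots> = (\<Sum>j\<in>J. \<Sum>i<m. \<Sum>j'\<in>J. X j i * X j' i)" by (rule sum.swap)
  also have "\<dots> = (\<Sum>j\<in>J. \<Sum>j'\<in>J. \<Sum>i<m. X j i * X j' i)" by (intro sum.cong refl sum.swap)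
  finally show ?thesis by (simp add: ipm_def)
qed

lemma tail_bound:
  fixes A :: "nat \<Rightarrow> nat \<Rightarrow> real" and t :: "nat \<Rightarrow> nat \<Rightarrow> real"
  assumes rip: "\<And>z. Defs.sparse n (2*k) z \<Longrightarrow> (1-\<delta>) * sqs n z \<le> sqs m (mat_vec m n A z) \<and> sqs m (mat_vec m n A z) \<le> (1+\<delta>) * sqs n z"
    and J: "finite J" and sp: "\<And>j. j \<in> J \<Longrightarrow> Defs.sparse n k (t j)"
    and disj: "\<And>j j' i. j \<in> J \<Longrightarrow> j' \<in> J \<Longrightarrow> j \<noteq> j' \<Longrightarrow> t j i * t j' i = 0"
  shows "sqs m (mat_vec m n A (\<lambda>i. \<Sum>j\<in>J. t j i)) \<le> (\<Sum>j\<in>J. sqs n (t j)) + \<delta> * (\<Sum>j\<in>J. sqrt (sqs n (t j)))^2"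
proof -
  define X where "X j = mat_vec m n A (t j)" for j
  define N where "N j = sqrt (sqs n (t j))" for j
  have N2: "N j * N j = sqs n (t j)" for j by (simp add: N_def sqs_nonneg)
  have "mat_vec m n A (\<lambda>i. \<Sum>j\<in>J. t j i) = (\<lambda>i. \<Sum>j\<in>J. X j i)" using J by (simp add: mat_vec_sum X_def)
  hence "sqs m (mat_vec m n A (\<lambda>i. \<Sum>j\<in>J. t j i)) = (\<Sum>j\<in>J. \<Sum>j'\<in>J. ipm m (X j) (X j'))"
    using sqs_sum_expand[OF J] by simp
  also have "\<dots> \<le> (\<Sum>j\<in>J. \<Sum>j'\<in>J. \<delta> * (N j * N j') + (if j = j' then sqs n (t j) else 0))"
  proof (intro sum_mono)
    fix j j' assume jj: "j \<in> J" "j' \<in> J"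
    show "ipm m (X j) (X j') \<le> \<delta> * (N j * N j') + (if j = j' then sqs n (t j) else 0)"
    proof (cases "j = j'")
      case True
      have "ipm m (X j) (X j) = sqs m (X j)" by (simp add: ipm_def sqs_def power2_eq_square)
      also have "\<dots> \<le> (1+\<delta>) * sqs n (t j)"
        using rip[OF sparse_mono[OF sp[OF jj(1)]]] by (simp add: X_def)
      also have "\<dots> = \<delta> * (N j * N j) + sqs n (t j)" by (simp add: N2 algebra_simps)
      finally show ?thesis using True by simp
    next
      case False
      have "ipm m (X j) (X j') \<le> \<bar>ipm m (X j) (X j')\<bar>" by simp
      also have "\<dots> \<le> \<delta> * N j * N j'" unfolding X_def N_def
        by (rule polar[OF rip]) (use disj jj False sp in auto)
      finally show ?thesis using False by (simp add: mult.assoc)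
    qed
  qed
  also have "\<dots> = \<delta> * (\<Sum>j\<in>J. N j)^2 + (\<Sum>j\<in>J. sqs n (t j))"
  proof -
    have "(\<Sum>j\<in>J. \<Sum>j'\<in>J. \<delta> * (N j * N j')) = (\<Sum>j\<in>J. (\<delta> * N j) * (\<Sum>j'\<in>J. N j'))"
      by (rule sum.cong[OF refl]) (simp add: sum_distrib_left mult.assoc)
    also have "\<dots> = (\<Sum>j\<in>J. \<delta> * N j) * (\<Sum>j'\<in>J. N j')" by (rule sum_distrib_right[symmetric])
    also have "(\<Sum>j\<in>J. \<delta> * N j) = \<delta> * (\<Sum>j\<in>J. N j)" by (rule sum_distrib_left[symmetric])
    finally have a0: "(\<Sum>j\<in>J. \<Sum>j'\<in>J. \<delta> * (N j * N j')) = \<delta> * ((\<Sum>j\<in>J. N j) * (\<Sum>j\<in>J. N j))"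
      by simp
    have a: "(\<Sum>j\<in>J. \<Sum>j'\<in>J. \<delta> * (N j * N j')) = \<delta> * (\<Sum>j\<in>J. N j)^2"
      using a0 by (simp add: power2_eq_square)
    have b: "(\<Sum>j\<in>J. \<Sum>j'\<in>J. (if j = j' then sqs n (t j) else 0)) = (\<Sum>j\<in>J. sqs n (t j))"
      using J by (simp add: sum.delta)
    show ?thesis using a b by (simp add: sum.distrib)
  qed
  finally show ?thesis by (simp add: N_def)
qed

lemma sort_perm:
  fixes f :: "nat \<Rightarrow> real" and a N :: nat
  obtains \<sigma> where "bij_betw \<sigma> {..<N} {a..<a+N}" "\<And>i j. i \<le> j \<Longrightarrow> j < N \<Longrightarrow> f (\<sigma> j) \<le> f (\<sigma> i)"
proof -
  define L where "L = sort_key (\<lambda>i. - f i) [a..<a+N]"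
  have d: "distinct L" by (simp add: L_def)
  have len: "length L = N" by (simp add: L_def)
  have st: "set L = {a..<a+N}" by (simp add: L_def)
  have b: "bij_betw ((!) L) {..<N} {a..<a+N}" using bij_betw_nth[OF d] len st by simp
  have so: "sorted (map (\<lambda>i. - f i) L)" by (simp add: L_def)
  have "f (L ! j) \<le> f (L ! i)" if "i \<le> j" "j < N" for i j
  proof -
    have "map (\<lambda>i. - f i) L ! i \<le> map (\<lambda>i. - f i) L ! j"
      using so that len by (simp add: sorted_iff_nth_mono)
    thus ?thesis using that len by simp
  qed
  thus ?thesis using that b by blast
qed

lemma sum_restrict_sq:
  assumes "T \<subseteq> {..<n}"
  shows "sqs n (restrict_vec h T) = (\<Sum>i\<in>T. (h i)^2)"
proof -
  have "sqs n (restrict_vec h T) = (\<Sum>i<n. if i \<in> T then (h i)^2 else 0)"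
    unfolding sqs_def by (intro sum.cong) (auto simp: restrict_vec_def)
  also have "\<dots> = (\<Sum>i\<in>{..<n} \<inter> T. (h i)^2)" by (simp add: sum.inter_restrict)
  also have "{..<n} \<inter> T = T" using assms by auto
  finally show ?thesis .
qed

lemma sum_restrict_powr:
  assumes "T \<subseteq> {..<n}" "0 < p"
  shows "(\<Sum>i<n. \<bar>restrict_vec h T i\<bar> powr p) = (\<Sum>i\<in>T. \<bar>h i\<bar> powr p)"
proof -
  have "(\<Sum>i<n. \<bar>restrict_vec h T i\<bar> powr p) = (\<Sum>i<n. if i \<in> T then \<bar>h i\<bar> powr p else 0)"
    by (intro sum.cong) (auto simp: restrict_vec_def)
  also have "\<dots> = (\<Sum>i\<in>{..<n} \<inter> T. \<bar>h i\<bar> powr p)" by (simp add: sum.inter_restrict)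
  also have "{..<n} \<inter> T = T" using assms by auto
  finally show ?thesis .
qed

lemma lpnorm_powr:
  assumes "0 < p"
  shows "(lpnorm n p v) powr p = (\<Sum>i<n. \<bar>v i\<bar> powr p)"
proof -
  have nn: "0 \<le> (\<Sum>i<n. \<bar>v i\<bar> powr p)" by (simp add: sum_nonneg)
  have "(lpnorm n p v) powr p = (\<Sum>i<n. \<bar>v i\<bar> powr p) powr (1/p * p)"
    by (simp add: lpnorm_def powr_powr)
  also have "1/p * p = 1" using assms by simp
  finally show ?thesis using nn by simp
qed

lemma powr_subadd:
  fixes x y p :: real
  assumes "0 \<le> x" "0 \<le> y" "0 < p" "p \<le> 1"
  shows "(x + y) powr p \<le> x powr p + y powr p"
proof (cases "x + y = 0")
  case True thus ?thesis using assms by simp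
next
  case False
  hence s: "x + y > 0" using assms by simp
  have u1: "x/(x+y) \<le> (x/(x+y)) powr p"
    using powr_mono'[of p 1 "x/(x+y)"] assms s by simp
  have u2: "y/(x+y) \<le> (y/(x+y)) powr p"
    using powr_mono'[of p 1 "y/(x+y)"] assms s by simp
  have "x/(x+y) + y/(x+y) = 1" using s by (simp add: add_divide_distrib[symmetric])
  hence "1 \<le> (x/(x+y)) powr p + (y/(x+y)) powr p"
    using u1 u2 by linarith
  hence "(x+y) powr p * 1 \<le> (x+y) powr p * ((x/(x+y)) powr p + (y/(x+y)) powr p)"
    by (intro mult_left_mono) auto
  also have "\<dots> = x powr p + y powr p"
    using s assms by (simp add: powr_divide distrib_left)
  finally show ?thesis by simp
qed

lemma power_mean:
  fixes z :: "nat \<Rightarrow> real" and k :: nat and p :: real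
  assumes p: "0 < p" "p < 1" and k: "k > 0"
  shows "(\<Sum>i<k. \<bar>z i\<bar> powr p) \<le> real k powr (1 - p/2) * (\<Sum>i<k. (z i)^2) powr (p/2)"
proof (cases "(\<Sum>i<k. (z i)^2) = 0")
  case True
  hence "\<And>i. i < k \<Longrightarrow> z i = 0" by (subst (asm) sum_nonneg_eq_0_iff) auto
  thus ?thesis using p by simp
next
  case False
  define S where "S = (\<Sum>i<k. (z i)^2)"
  have S: "S > 0" using False by (simp add: S_def sum_nonneg order_le_neq_trans)
  define M where "M = S / k"
  have M: "M > 0" using S k by (simp add: M_def)
  have each: "\<bar>z i\<bar> powr p \<le> M powr (p/2) * (p/2 * ((z i)^2 / M) + (1 - p/2))" for i
  proof (cases "z i = 0")
    case True thus ?thesis using p M by (simp add: mult_pos_pos)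
  next
    case False
    have "((z i)^2 / M) powr (p/2) * 1 powr (1 - p/2) \<le> p/2 * ((z i)^2 / M) + (1 - p/2) * 1"
      by (rule Youngs_inequality_0) (use p M False in auto)
    hence y: "((z i)^2 / M) powr (p/2) \<le> p/2 * ((z i)^2 / M) + (1 - p/2)" by simp
    have e2: "(z i)^2 = \<bar>z i\<bar> powr 2" using powr_realpow[of "\<bar>z i\<bar>" 2] False by simp
    have "((z i)^2) powr (p/2) = (\<bar>z i\<bar> powr 2) powr (p/2)" by (simp only: e2)
    also have "\<dots> = \<bar>z i\<bar> powr p" unfolding powr_powr by simp
    finally have "\<bar>z i\<bar> powr p = ((z i)^2) powr (p/2)" by (rule sym)
    also have "\<dots> = M powr (p/2) * ((z i)^2 / M) powr (p/2)"
      using M by (simp add: powr_divide)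
    also have "\<dots> \<le> M powr (p/2) * (p/2 * ((z i)^2 / M) + (1 - p/2))"
      using y by (intro mult_left_mono) auto
    finally show ?thesis .
  qed
  have "(\<Sum>i<k. \<bar>z i\<bar> powr p) \<le> (\<Sum>i<k. M powr (p/2) * (p/2 * ((z i)^2 / M) + (1 - p/2)))"
    by (intro sum_mono each)
  also have "\<dots> = M powr (p/2) * (\<Sum>i<k. p/2 * ((z i)^2 / M) + (1 - p/2))"
    by (simp add: sum_distrib_left)
  also have "(\<Sum>i<k. p/2 * ((z i)^2 / M) + (1 - p/2)) = p/2 * (S / M) + k * (1 - p/2)"
    by (simp add: sum.distrib S_def sum_divide_distrib sum_distrib_left)
  also have "S / M = k" using k S by (simp add: M_def)
  also have "M powr (p/2) * (p/2 * real k + k * (1 - p/2)) = k * M powr (p/2)" by (simp add: algebra_simps)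
  also have "\<dots> = real k powr (1 - p/2) * S powr (p/2)"
  proof -
    have "M powr (p/2) = S powr (p/2) / real k powr (p/2)" using S k by (simp add: M_def powr_divide)
    moreover have "real k = real k powr (1 - p/2) * real k powr (p/2)" using k by (simp flip: powr_add)
    moreover have "real k powr (p/2) > 0" using k by simp
    moreover have "\<And>Mp Sp Kp kk K1 :: real. Mp = Sp / Kp \<Longrightarrow> kk = K1 * Kp \<Longrightarrow> Kp > 0 \<Longrightarrow> kk * Mp = K1 * Sp"
      by simp
    ultimately show ?thesis by blast
  qed
  finally show ?thesis by (simp add: S_def)
qed

lemma final_alg:
  fixes D \<delta> a2 b2 tt Bp T \<epsilon> Z g mm E1 :: real
  assumes D: "D = 1 - \<delta>" "0 < D" and d: "1 \<le> 2*\<delta>"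
    and nn: "0 \<le> a2" "0 \<le> b2" "0 \<le> tt" "0 \<le> T" "0 \<le> \<epsilon>" "0 \<le> Z" "0 \<le> g" "0 \<le> mm" "0 \<le> E1"
    and i: "D*(a2+b2) \<le> (2*\<epsilon>+T)^2" and ii: "T^2 \<le> tt + \<delta>*Bp^2"
    and iii: "tt - D*b2 \<le> E1" and iv: "tt \<le> g*Z" and v: "Bp^2 \<le> 2*mm*Z" and vi: "g \<le> 2*\<delta>*mm"
  shows "D*a2 \<le> (2* sqrt 2*\<epsilon> + sqrt (E1 + 2*\<delta>*mm*Z))^2"
proof -
  define Y where "Y = sqrt (E1 + 2*\<delta>*mm*Z)"
  have mZ: "0 \<le> 2*\<delta>*mm*Z" using d nn by (intro mult_nonneg_nonneg) auto
  have s0: "0 \<le> E1 + 2*\<delta>*mm*Z" using mZ nn(9) by linarith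
  have Y2: "Y^2 = E1 + 2*\<delta>*mm*Z" unfolding Y_def by (rule real_sqrt_pow2[OF s0])
  have Y0: "0 \<le> Y" using s0 by (simp add: Y_def)
  define K where "K = \<delta>*mm*Z"
  have Y2': "Y^2 = E1 + 2*K" using Y2 by (simp add: K_def)
  have dB: "\<delta>*Bp^2 \<le> 2*K"
  proof -
    have "\<delta>*Bp^2 \<le> \<delta>*(2*mm*Z)" using v d by (intro mult_left_mono) auto
    thus ?thesis by (simp add: K_def algebra_simps)
  qed
  have c1: "T^2 - D*b2 \<le> Y^2" using ii iii dB Y2' by linarith
  have gZ: "g*Z \<le> 2*K"
  proof -
    have "g*Z \<le> (2*\<delta>*mm)*Z" using vi nn by (intro mult_right_mono) auto
    thus ?thesis by (simp add: K_def algebra_simps)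
  qed
  have s2: "(sqrt 2 * Y)^2 = 2*Y^2" by (simp add: power_mult_distrib)
  have "T^2 \<le> (sqrt 2 * Y)^2" using ii iv dB gZ Y2' nn(9) s2 by linarith
  moreover have "0 \<le> sqrt 2 * Y" using Y0 by simp
  ultimately have TY: "T \<le> sqrt 2 * Y" by (rule power2_le_imp_le)
  have eT: "\<epsilon>*T \<le> \<epsilon>*(sqrt 2*Y)" using TY nn by (intro mult_left_mono) auto
  have q1: "(2*\<epsilon>+T)^2 = 4*\<epsilon>^2 + 4*(\<epsilon>*T) + T^2" by (simp add: power2_eq_square algebra_simps)
  have q2: "(2*sqrt 2*\<epsilon> + Y)^2 = 8*\<epsilon>^2 + 4*(\<epsilon>*(sqrt 2*Y)) + Y^2"
  proof -
    have "(2*sqrt 2*\<epsilon> + Y)^2 = 4*(sqrt 2)^2*\<epsilon>^2 + 4*(\<epsilon>*(sqrt 2*Y)) + Y^2"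
      by (simp add: power2_eq_square algebra_simps)
    thus ?thesis by simp
  qed
  have q3: "D*(a2+b2) = D*a2 + D*b2" by (simp add: algebra_simps)
  have "0 \<le> \<epsilon>^2" by simp
  hence "D*a2 \<le> (2*sqrt 2*\<epsilon> + Y)^2" using i c1 eT q1 q2 q3 by linarith
  thus ?thesis by (simp add: Y_def)
qed

lemma sq_powr_half:
  fixes X p :: real
  assumes "0 \<le> X" "0 < p"
  shows "(X^2) powr (p/2) = X powr p"
proof (cases "X = 0")
  case True thus ?thesis using assms by simp
next
  case False
  hence X: "X > 0" using assms by simp
  have "X^2 = X powr 2" using powr_realpow[OF X, of 2] by simp
  hence "(X^2) powr (p/2) = (X powr 2) powr (p/2)" by (simp only:)
  also have "\<dots> = X powr p" unfolding powr_powr by simp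
  finally show ?thesis .
qed

lemma final_conv:
  fixes D a2 \<epsilon> Nn Z Q kk p C L :: real
  assumes D: "D > 0" and a2: "0 \<le> a2" and e: "0 \<le> \<epsilon>" and Nn: "0 \<le> Nn" and Q: "0 \<le> Q" and kk: "kk > 0"
    and p: "0 < p" "p < 1" and Z: "Z = kk powr (1 - 2/p) * Q powr (2/p)"
    and L: "L \<le> kk powr (1 - p/2) * a2 powr (p/2)"
    and H: "D*a2 \<le> (2 * sqrt 2 * \<epsilon> + sqrt (Nn*Z))^2"
    and C: "C = (Nn/D) powr (p/2)"
  shows "L \<le> 2 powr (3*p/2) / D powr (p/2) * kk powr (1 - p/2) * \<epsilon> powr p + C * Q"
proof -
  have Z0: "0 \<le> Z" using Z by simp
  define X where "X = 2 * sqrt 2 * \<epsilon> + sqrt (Nn*Z)"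
  have X0: "0 \<le> X" using e Nn Z0 by (simp add: X_def)
  have "a2 \<le> X^2 / D" using H D by (simp add: X_def field_simps)
  hence "a2 powr (p/2) \<le> (X^2 / D) powr (p/2)" using a2 p by (intro powr_mono2) auto
  also have "\<dots> = (X^2) powr (p/2) / D powr (p/2)" using D by (simp add: powr_divide)
  also have "(X^2) powr (p/2) = X powr p" by (rule sq_powr_half[OF X0 p(1)])
  finally have a2p: "a2 powr (p/2) \<le> X powr p / D powr (p/2)" .
  have "X powr p \<le> (2 * sqrt 2 * \<epsilon>) powr p + sqrt (Nn*Z) powr p"
    unfolding X_def by (rule powr_subadd) (use e Nn Z0 p in auto)
  also have "(2 * sqrt 2 * \<epsilon>) powr p = 2 powr (3*p/2) * \<epsilon> powr p"
  proof -
    have "sqrt 2 = (2::real) powr (1/2)" by (simp add: powr_half_sqrt)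
    hence "2 * sqrt 2 = (2::real) powr 1 * 2 powr (1/2)" by simp
    also have "\<dots> = 2 powr (3/2)" using powr_add[of "2::real" 1 "1/2"] by simp
    finally have "(2 * sqrt 2 * \<epsilon>) powr p = (2 powr (3/2) * \<epsilon>) powr p" by simp
    also have "\<dots> = (2 powr (3/2)) powr p * \<epsilon> powr p" using e by (simp add: powr_mult)
    also have "(2 powr (3/2)) powr p = (2::real) powr (3*p/2)" by (simp add: powr_powr)
    finally show ?thesis .
  qed
  also have "sqrt (Nn*Z) powr p = Nn powr (p/2) * (kk powr (p/2 - 1) * Q)"
  proof -
    have "sqrt (Nn*Z) powr p = (Nn*Z) powr (p/2)"
      using Nn Z0 by (simp add: powr_half_sqrt[symmetric] powr_powr)
    also have "\<dots> = Nn powr (p/2) * Z powr (p/2)" using Nn Z0 by (simp add: powr_mult)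
    also have "Z powr (p/2) = kk powr ((1 - 2/p)*(p/2)) * Q powr ((2/p)*(p/2))"
      using Z kk Q by (simp add: powr_mult powr_powr)
    also have "(1 - 2/p)*(p/2) = p/2 - 1" using p by (simp add: field_simps)
    also have "(2/p)*(p/2) = 1" using p by simp
    finally show ?thesis using Q by simp
  qed
  finally have Xp: "X powr p \<le> 2 powr (3*p/2) * \<epsilon> powr p + Nn powr (p/2) * (kk powr (p/2 - 1) * Q)" .
  have "L \<le> kk powr (1 - p/2) * (X powr p / D powr (p/2))"
    using L a2p by (smt (verit) mult_left_mono powr_ge_zero)
  also have "\<dots> \<le> kk powr (1 - p/2) * ((2 powr (3*p/2) * \<epsilon> powr p + Nn powr (p/2) * (kk powr (p/2 - 1) * Q)) / D powr (p/2))"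
    using Xp D by (intro mult_left_mono divide_right_mono) auto
  also have "\<dots> = 2 powr (3*p/2) / D powr (p/2) * kk powr (1 - p/2) * \<epsilon> powr p
      + (Nn powr (p/2) / D powr (p/2)) * (kk powr (1 - p/2) * kk powr (p/2 - 1)) * Q"
  proof -
    have Dp: "D powr (p/2) > 0" using D by simp
    show ?thesis using Dp by (simp add: field_simps)
  qed
  also have "kk powr (1 - p/2) * kk powr (p/2 - 1) = 1" using kk by (simp flip: powr_add)
  also have "Nn powr (p/2) / D powr (p/2) = C" using C Nn D by (simp add: powr_divide)
  finally show ?thesis by simp
qed

lemma block_disj:
  fixes k j j' :: nat
  assumes "k > 0" "j \<noteq> j'"
  shows "{j*k..<j*k+k} \<inter> {j'*k..<j'*k+k} = {}"
proof -
  { fix a b :: nat assume ab: "a < b"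
    hence "a*k + k \<le> b*k" using assms by (metis Suc_leI mult_Suc mult_le_mono1 add.commute)
    hence "{a*k..<a*k+k} \<inter> {b*k..<b*k+k} = {}" by auto }
  thus ?thesis using assms by (cases "j < j'") (auto simp: Int_commute dest: linorder_neq_iff[THEN iffD1])
qed

lemma block_sub:
  fixes k j l :: nat
  assumes "j < l"
  shows "{j*k..<j*k+k} \<subseteq> {..<l*k}"
proof -
  have "j*k + k \<le> l*k" using assms by (metis Suc_leI mult_Suc mult_le_mono1 add.commute)
  thus ?thesis by auto
qed

lemma sum_blocks:
  fixes f :: "nat \<Rightarrow> real" and k l :: nat
  assumes "l > 0"
  shows "(\<Sum>j\<in>{1..<l}. \<Sum>i\<in>{j*k..<j*k+k}. f i) = (\<Sum>i\<in>{k..<l*k}. f i)"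
proof -
  have g: "(\<Sum>j<l. \<Sum>i\<in>{j*k..<j*k+k}. f i) = (\<Sum>i<l*k. f i)" by (rule sum.nat_group)
  have s1: "(\<Sum>j<l. \<Sum>i\<in>{j*k..<j*k+k}. f i) = (\<Sum>i\<in>{0..<k}. f i) + (\<Sum>j\<in>{1..<l}. \<Sum>i\<in>{j*k..<j*k+k}. f i)"
    using sum_split0[of 0 l "\<lambda>j. \<Sum>i\<in>{j*k..<j*k+k}. f i"] assms by (simp add: atLeast0LessThan)
  have "k \<le> l*k" using assms by simp
  hence s2: "(\<Sum>i<l*k. f i) = (\<Sum>i<k. f i) + (\<Sum>i\<in>{k..<l*k}. f i)"
    by (metis atLeast0LessThan sum.atLeastLessThan_concat zero_le)
  show ?thesis using g s1 s2 by (simp add: atLeast0LessThan)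
qed

lemma main_bound:
  fixes k l m n :: nat and A :: "nat \<Rightarrow> nat \<Rightarrow> real" and h :: "nat \<Rightarrow> real" and \<delta> \<epsilon> p :: real
  assumes k: "k > 0" and l: "l > 0" and n: "n = l*k + k"
    and rip: "\<And>z. Defs.sparse n (2*k) z \<Longrightarrow> (1-\<delta>) * sqs n z \<le> sqs m (mat_vec m n A z) \<and> sqs m (mat_vec m n A z) \<le> (1+\<delta>) * sqs n z"
    and d1: "sqrt 2 / 2 \<le> \<delta>" and d2: "\<delta> < 1" and e: "0 \<le> \<epsilon>"
    and Ah: "norm2 m (mat_vec m n A h) \<le> 2*\<epsilon>"
    and p: "0 < p" "p < 1"
  shows "(\<Sum>i<k. \<bar>h i\<bar> powr p) \<le> 2 powr (3*p/2) / (1-\<delta>) powr (p/2) * real k powr (1 - p/2) * \<epsilon> powr p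
           + C_const \<delta> p * (\<Sum>i\<in>{k..<n}. \<bar>h i\<bar> powr p)"
proof -
  define N where "N = l*k"
  obtain \<sigma> where bij: "bij_betw \<sigma> {..<N} {k..<k+N}"
    and sdec: "\<And>i j. i \<le> j \<Longrightarrow> j < N \<Longrightarrow> \<bar>h (\<sigma> j)\<bar> \<le> \<bar>h (\<sigma> i)\<bar>"
    using sort_perm[of N k "\<lambda>i. \<bar>h i\<bar>"] by blast
  have kN: "k + N = n" using n by (simp add: N_def)
  have inj: "inj_on \<sigma> {..<N}" using bij by (simp add: bij_betw_def)
  have img: "\<sigma> ` {..<N} = {k..<n}" using bij kN by (simp add: bij_betw_def)
  define c where "c i = \<bar>h (\<sigma> i)\<bar>" for i
  define Bk where "Bk j = \<sigma> ` {j*k..<j*k+k}" for j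
  define R where "R = \<sigma> ` {k..<N}"
  have blk: "\<And>j. j < l \<Longrightarrow> {j*k..<j*k+k} \<subseteq> {..<N}" unfolding N_def by (rule block_sub)
  have B_sub: "\<And>j. j < l \<Longrightarrow> Bk j \<subseteq> {k..<n}" unfolding Bk_def using blk img by blast
  have B_card: "\<And>j. card (Bk j) \<le> k"
    unfolding Bk_def by (metis card_atLeastLessThan card_image_le finite_atLeastLessThan add_diff_cancel_left')
  have B_disj: "\<And>j j'. j < l \<Longrightarrow> j' < l \<Longrightarrow> j \<noteq> j' \<Longrightarrow> Bk j \<inter> Bk j' = {}"
  proof -
    fix j j' assume jj: "j < l" "j' < l" "j \<noteq> j'"
    have "Bk j \<inter> Bk j' = \<sigma> ` ({j*k..<j*k+k} \<inter> {j'*k..<j'*k+k})"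
      unfolding Bk_def by (rule inj_on_image_Int[OF inj blk[OF jj(1)] blk[OF jj(2)], symmetric])
    thus "Bk j \<inter> Bk j' = {}" using block_disj[OF k jj(3)] by simp
  qed
  have B_sum: "(\<Sum>i\<in>Bk j. F i) = (\<Sum>i\<in>{j*k..<j*k+k}. F (\<sigma> i))" if jl: "j < l" for j and F :: "nat \<Rightarrow> real"
    unfolding Bk_def by (rule sum.reindex_cong[OF inj_on_subset[OF inj blk[OF jl]]]) auto
  have B_fin: "\<And>j. finite (Bk j)" by (simp add: Bk_def)
  have R_sub: "R \<subseteq> {k..<n}" unfolding R_def using img by auto
  have B0: "Bk 0 = \<sigma> ` {..<k}" by (simp add: Bk_def atLeast0LessThan)
  define w where "w = restrict_vec h {..<k}"
  define v where "v = restrict_vec h (Bk 0)"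
  define t where "t j = restrict_vec h (Bk j)" for j
  define tl where "tl = (\<lambda>i. \<Sum>j\<in>{1..<l}. t j i)"
  have BR: "\<And>j. j \<in> {1..<l} \<Longrightarrow> Bk j \<subseteq> R"
  proof -
    fix j assume j: "j \<in> {1..<l}"
    have "k \<le> j*k" using j by simp
    have "{j*k..<j*k+k} \<subseteq> {k..<N}"
    proof
      fix x assume x: "x \<in> {j*k..<j*k+k}"
      have "j < l" using j by simp
      hence "x < N" using blk[of j] x by blast
      moreover have "k \<le> x"
      proof -
        have "j*k \<le> x" using x by simp
        thus ?thesis by (rule le_trans[OF \<open>k \<le> j*k\<close>])
      qed
      ultimately show "x \<in> {k..<N}" by simp
    qed
    thus "Bk j \<subseteq> R" unfolding Bk_def R_def by (rule image_mono)
  qed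
  have tl_eq: "tl = restrict_vec h R"
  proof
    fix i
    have tli: "tl i = (\<Sum>j\<in>{1..<l}. if i \<in> Bk j then h i else 0)"
      by (simp add: tl_def t_def restrict_vec_def)
    show "tl i = restrict_vec h R i"
    proof (cases "i \<in> R")
      case True
      then obtain i' where i': "i' \<in> {k..<N}" "i = \<sigma> i'" unfolding R_def by auto
      define j0 where "j0 = i' div k"
      have j0a: "1 \<le> j0" using i' k by (simp add: j0_def div_le_mono[of k i' k, simplified] Suc_le_eq div_greater_zero_iff)
      have j0b: "j0 < l" using i' k by (simp add: j0_def N_def less_mult_imp_div_less)
      have e1: "i' div k * k + i' mod k = i'" by (rule div_mult_mod_eq)
      have e2: "i' mod k < k" using k by simp
      have "j0*k \<le> i'" "i' < j0*k + k" using e1 e2 unfolding j0_def by linarith+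
      hence iblk: "i' \<in> {j0*k..<j0*k+k}" by simp
      have inB: "i \<in> Bk j0" using iblk i' by (simp add: Bk_def)
      have "\<And>j. j \<in> {1..<l} \<Longrightarrow> (i \<in> Bk j) = (j = j0)"
      proof -
        fix j assume j: "j \<in> {1..<l}"
        show "(i \<in> Bk j) = (j = j0)"
        proof
          assume a: "i \<in> Bk j"
          have jl: "j < l" using j by simp
          show "j = j0"
          proof (rule ccontr)
            assume "j \<noteq> j0"
            hence "Bk j \<inter> Bk j0 = {}" using B_disj jl j0b by blast
            thus False using a inB by blast
          qed
        qed (use inB in simp)
      qed
      hence cg: "\<And>j. j \<in> {1..<l} \<Longrightarrow> (if i \<in> Bk j then h i else 0) = (if j = j0 then h i else 0)" by simp
      have "tl i = (\<Sum>j\<in>{1..<l}. if j = j0 then h i else 0)" unfolding tli by (rule sum.cong[OF refl cg])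
      also have "\<dots> = h i" using j0a j0b by simp
      finally show ?thesis using True by (simp add: restrict_vec_def)
    next
      case False
      hence "\<And>j. j \<in> {1..<l} \<Longrightarrow> i \<notin> Bk j" using BR by blast
      hence "tl i = 0" using tli by simp
      thus ?thesis using False by (simp add: restrict_vec_def)
    qed
  qed
  have decomp: "\<And>i. i < n \<Longrightarrow> h i = w i + v i + tl i"
  proof -
    fix i assume i: "i < n"
    show "h i = w i + v i + tl i"
    proof (cases "i < k")
      case True
      hence "i \<notin> Bk 0" "i \<notin> R" using B_sub[OF l] R_sub by auto
      thus ?thesis using True by (simp add: w_def v_def tl_eq restrict_vec_def)
    next
      case False
      hence "i \<in> \<sigma> ` {..<N}" using img i by auto
      then obtain i' where i': "i' < N" "i = \<sigma> i'" by auto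
      show ?thesis
      proof (cases "i' < k")
        case True
        have "i \<in> Bk 0" using True i' B0 by auto
        moreover have "i \<notin> R"
        proof
          assume "i \<in> R"
          then obtain i'' where "i'' \<in> {k..<N}" "i = \<sigma> i''" unfolding R_def by auto
          hence "i'' = i'" using inj i' by (auto dest: inj_onD)
          thus False using True \<open>i'' \<in> {k..<N}\<close> by simp
        qed
        ultimately show ?thesis using False by (simp add: w_def v_def tl_eq restrict_vec_def)
      next
        case False2: False
        have "i \<in> R" using False2 i' by (auto simp: R_def)
        moreover have "i \<notin> Bk 0"
        proof
          assume "i \<in> Bk 0"
          then obtain i'' where "i'' < k" "i = \<sigma> i''" unfolding B0 by auto
          moreover have "i'' < N"
          proof -
            have "k \<le> N" using l by (simp add: N_def)
            thus ?thesis using \<open>i'' < k\<close> by linarith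
          qed
          ultimately have "i'' = i'" using inj i' by (auto dest: inj_onD)
          thus False using False2 \<open>i'' < k\<close> by simp
        qed
        ultimately show ?thesis using False by (simp add: w_def v_def tl_eq restrict_vec_def)
      qed
    qed
  qed
  have kn: "k \<le> n" using n by simp
  have lkN: "l*k = N" by (simp add: N_def)
  have c_nn: "\<And>i. 0 \<le> c i" by (simp add: c_def)
  have c_dec: "\<And>i j. i \<le> j \<Longrightarrow> j < l*k \<Longrightarrow> c j \<le> c i" unfolding c_def using sdec lkN by simp
  have B0sub: "Bk 0 \<subseteq> {..<n}" using B_sub[OF l] by auto
  define a2 where "a2 = sqs n w"
  have a2_eq: "a2 = (\<Sum>i<k. (h i)^2)" unfolding a2_def w_def by (rule sum_restrict_sq) (use kn in auto)
  define b2 where "b2 = sqs n v"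
  have b2_eq: "b2 = (\<Sum>i<k. (c i)^2)"
  proof -
    have "b2 = (\<Sum>i\<in>Bk 0. (h i)^2)" unfolding b2_def v_def by (rule sum_restrict_sq[OF B0sub])
    also have "\<dots> = (\<Sum>i\<in>{0*k..<0*k+k}. (h (\<sigma> i))^2)" by (rule B_sum[OF l])
    finally show ?thesis by (simp add: c_def atLeast0LessThan)
  qed
  have st: "sqs n (t j) = (\<Sum>i\<in>{j*k..<j*k+k}. (c i)^2)" if jl: "j < l" for j
  proof -
    have "Bk j \<subseteq> {..<n}" using B_sub[OF jl] by auto
    hence "sqs n (t j) = (\<Sum>i\<in>Bk j. (h i)^2)" unfolding t_def by (rule sum_restrict_sq)
    also have "\<dots> = (\<Sum>i\<in>{j*k..<j*k+k}. (h (\<sigma> i))^2)" by (rule B_sum[OF jl])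
    finally show ?thesis by (simp add: c_def)
  qed
  define tt where "tt = (\<Sum>j\<in>{1..<l}. sqs n (t j))"
  have tt_eq: "tt = (\<Sum>i\<in>{k..<l*k}. (c i)^2)"
  proof -
    have "tt = (\<Sum>j\<in>{1..<l}. \<Sum>i\<in>{j*k..<j*k+k}. (c i)^2)" unfolding tt_def
      by (rule sum.cong) (auto intro: st)
    also have "\<dots> = (\<Sum>i\<in>{k..<l*k}. (c i)^2)" by (rule sum_blocks[OF l])
    finally show ?thesis .
  qed
  define Q where "Q = (\<Sum>i<l*k. c i powr p)"
  have Q_eq: "(\<Sum>i\<in>{k..<n}. \<bar>h i\<bar> powr p) = Q"
  proof -
    have "(\<Sum>i\<in>{k..<n}. \<bar>h i\<bar> powr p) = (\<Sum>i\<in>\<sigma> ` {..<N}. \<bar>h i\<bar> powr p)" using img by simp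
    also have "\<dots> = (\<Sum>i<N. \<bar>h (\<sigma> i)\<bar> powr p)" by (rule sum.reindex_cong[OF inj refl]) simp
    finally show ?thesis by (simp add: Q_def c_def lkN)
  qed
  have Q0: "0 \<le> Q" by (simp add: Q_def sum_nonneg)
  define Z where "Z = real k powr (1 - 2/p) * Q powr (2/p)"
  have Z0: "0 \<le> Z" by (simp add: Z_def)
  define g where "g = g_fun p"
  have g0: "0 \<le> g" using g_nonneg[OF p] by (simp add: g_def)
  define D where "D = 1 - \<delta>"
  have D0: "0 < D" using d2 by (simp add: D_def)
  have s2: "1 \<le> sqrt (2::real)" by simp
  have d: "1 \<le> 2*\<delta>" using d1 s2 by linarith
  define wv where "wv = (\<lambda>i. 1 * w i + 1 * v i)"
  have spw: "Defs.sparse n k w"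
    by (rule sparse_sub[of n w "{..<k}"]) (auto simp: w_def restrict_vec_def split: if_splits)
  have spv: "Defs.sparse n k v"
    by (rule sparse_sub[of n v "Bk 0"]) (auto simp: v_def restrict_vec_def B_card B_fin split: if_splits)
  have disj_wv: "\<And>i. w i * v i = 0"
  proof -
    fix i
    show "w i * v i = 0"
    proof (cases "i < k")
      case True hence "i \<notin> Bk 0" using B_sub[OF l] by auto
      thus ?thesis by (simp add: v_def restrict_vec_def)
    qed (simp add: w_def restrict_vec_def)
  qed
  have sp_wv: "Defs.sparse n (2*k) wv" unfolding wv_def by (rule sparse_comb[OF spw spv])
  have sqs_wv: "sqs n wv = a2 + b2" unfolding wv_def a2_def b2_def using sqs_disj[OF disj_wv, where n=n and a=1 and b=1] by simp
  have low: "D * (a2 + b2) \<le> sqs m (mat_vec m n A wv)" using rip[OF sp_wv] sqs_wv by (simp add: D_def)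
  have Awv: "mat_vec m n A wv = (\<lambda>i. mat_vec m n A h i - mat_vec m n A tl i)"
  proof -
    have "mat_vec m n A wv = mat_vec m n A (\<lambda>i. 1 * h i + (-1) * tl i)"
      by (rule mat_vec_cong) (use decomp in \<open>simp add: wv_def\<close>)
    also have "\<dots> = (\<lambda>i. 1 * mat_vec m n A h i + (-1) * mat_vec m n A tl i)" by (rule mat_vec_lin)
    finally show ?thesis by simp
  qed
  define T where "T = norm2 m (mat_vec m n A tl)"
  have T0: "0 \<le> T" by (simp add: T_def norm2_sqs sqs_nonneg)
  have "norm2 m (mat_vec m n A wv) \<le> norm2 m (mat_vec m n A h) + T"
    unfolding Awv T_def by (rule norm2_diff_le)
  hence nwv: "norm2 m (mat_vec m n A wv) \<le> 2*\<epsilon> + T" using Ah by linarith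
  have "sqs m (mat_vec m n A wv) = (norm2 m (mat_vec m n A wv))^2" by (simp add: norm2_sq)
  also have "\<dots> \<le> (2*\<epsilon> + T)^2" by (rule power_mono[OF nwv]) (simp add: norm2_sqs sqs_nonneg)
  finally have i1: "D * (a2 + b2) \<le> (2*\<epsilon> + T)^2" using low by linarith
  define Bp where "Bp = (\<Sum>j\<in>{1..<l}. sqrt (sqs n (t j)))"
  have "sqs m (mat_vec m n A (\<lambda>i. \<Sum>j\<in>{1..<l}. t j i)) \<le> (\<Sum>j\<in>{1..<l}. sqs n (t j)) + \<delta> * (\<Sum>j\<in>{1..<l}. sqrt (sqs n (t j)))^2"
  proof (rule tail_bound[OF rip])
    show "finite {1..<l}" by simp
    show "\<And>j. j \<in> {1..<l} \<Longrightarrow> Defs.sparse n k (t j)"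
      by (rule sparse_sub[of n _ "Bk _"]) (auto simp: t_def restrict_vec_def B_card B_fin split: if_splits)
    show "\<And>j j' i. j \<in> {1..<l} \<Longrightarrow> j' \<in> {1..<l} \<Longrightarrow> j \<noteq> j' \<Longrightarrow> t j i * t j' i = 0"
    proof -
      fix j j' i assume jj: "j \<in> {1..<l}" "j' \<in> {1..<l}" "j \<noteq> j'"
      have "Bk j \<inter> Bk j' = {}" using B_disj jj by simp
      thus "t j i * t j' i = 0" by (auto simp: t_def restrict_vec_def)
    qed
  qed
  hence ii: "T^2 \<le> tt + \<delta> * Bp^2" by (simp add: T_def norm2_sq tt_def Bp_def tl_def)
  have iii: "tt - D * b2 \<le> (2-\<delta>) powr (1 - 2/p) * g * Z"
  proof -
    have "(\<Sum>i\<in>{k..<l*k}. (c i)^2) - (1-\<delta>) * (\<Sum>i<k. (c i)^2)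
     \<le> (1+(1-\<delta>)) powr (1 - 2/p) * g_fun p * real k powr (1 - 2/p) * (\<Sum>i<l*k. c i powr p) powr (2/p)"
      by (rule seq_S1[OF k l p]) (use d2 c_nn c_dec in auto)
    thus ?thesis by (simp add: tt_eq b2_eq D_def g_def Z_def Q_def mult.assoc)
  qed
  have iv: "tt \<le> g * Z"
  proof -
    have "(\<Sum>i\<in>{k..<l*k}. (c i)^2) - 0 * (\<Sum>i<k. (c i)^2)
     \<le> (1+0) powr (1 - 2/p) * g_fun p * real k powr (1 - 2/p) * (\<Sum>i<l*k. c i powr p) powr (2/p)"
      by (rule seq_S1[OF k l p]) (use c_nn c_dec in auto)
    thus ?thesis by (simp add: tt_eq g_def Z_def Q_def mult.assoc)
  qed
  define P where "P j = (\<Sum>i\<in>{j*k..<j*k+k}. c i powr p)" for j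
  define x where "x j = (if j < l then P j else 0)" for j
  have P0: "\<And>j. 0 \<le> P j" by (simp add: P_def sum_nonneg)
  have x_nn: "\<And>j. 0 \<le> x j" using P0 by (simp add: x_def)
  have x_dec: "\<And>j. x (Suc j) \<le> x j"
  proof -
    fix j
    show "x (Suc j) \<le> x j"
    proof (cases "Suc j < l")
      case True
      have "P (Suc j) \<le> P (Suc j - 1)" unfolding P_def
        by (rule block_bound(2)[OF k p _ True]) (use c_nn c_dec in auto)
      thus ?thesis using True by (simp add: x_def)
    qed (simp add: x_def P0)
  qed
  have x_pad: "\<And>j. l \<le> j \<Longrightarrow> x j = 0" by (simp add: x_def)
  have x_sum: "(\<Sum>j<l. x j) = Q"
  proof -
    have "(\<Sum>j<l. x j) = (\<Sum>j<l. P j)" by (simp add: x_def)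
    also have "\<dots> = Q" unfolding P_def Q_def by (rule sum.nat_group)
    finally show ?thesis .
  qed
  have sqrt_lem: "sqrt ((P0'/real k) powr (2/p-1) * P1') = real k powr (1/2 - 1/p) * sqrt (P0' powr (2/p-1) * P1')"
    if "0 \<le> P0'" "0 \<le> P1'" for P0' P1'
  proof -
    have kp: "real k > 0" using k by simp
    have "(P0'/real k) powr (2/p-1) = P0' powr (2/p-1) / real k powr (2/p-1)" by (rule powr_divide)
    also have "\<dots> = real k powr (-(2/p-1)) * P0' powr (2/p-1)"
      by (simp only: powr_minus divide_inverse mult.commute)
    finally have "(P0'/real k) powr (2/p-1) = real k powr (-(2/p-1)) * P0' powr (2/p-1)" .
    hence "sqrt ((P0'/real k) powr (2/p-1) * P1') = sqrt (real k powr (-(2/p-1))) * sqrt (P0' powr (2/p-1) * P1')"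
      by (simp add: real_sqrt_mult mult.assoc)
    also have "sqrt (real k powr (-(2/p-1))) = real k powr (-(2/p-1)/2)"
      using powr_half_sqrt_powr[of "real k" "-(2/p-1)"] by simp
    also have "-(2/p-1)/2 = 1/2 - 1/p" by (simp add: field_simps)
    finally show ?thesis .
  qed
  define S where "S = (\<Sum>j\<in>{1..<l}. sqrt (x (j-1) powr (2/p-1) * x j))"
  have Bp_le: "Bp \<le> real k powr (1/2 - 1/p) * S"
  proof -
    have "Bp \<le> (\<Sum>j\<in>{1..<l}. real k powr (1/2 - 1/p) * sqrt (x (j-1) powr (2/p-1) * x j))"
      unfolding Bp_def
    proof (rule sum_mono)
      fix j assume j: "j \<in> {1..<l}"
      have jl: "j < l" "1 \<le> j" "j - 1 < l" using j by auto
      have "sqs n (t j) \<le> (P (j-1) / real k) powr (2/p-1) * P j"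
        unfolding st[OF jl(1)] P_def by (rule block_bound(1)[OF k p jl(2) jl(1)]) (use c_nn c_dec in auto)
      hence "sqrt (sqs n (t j)) \<le> sqrt ((P (j-1) / real k) powr (2/p-1) * P j)" by (rule real_sqrt_le_mono)
      also have "\<dots> = real k powr (1/2 - 1/p) * sqrt (P (j-1) powr (2/p-1) * P j)"
        by (rule sqrt_lem) (use P0 in auto)
      finally show "sqrt (sqs n (t j)) \<le> real k powr (1/2 - 1/p) * sqrt (x (j-1) powr (2/p-1) * x j)"
        using jl by (simp add: x_def)
    qed
    also have "\<dots> = real k powr (1/2 - 1/p) * S" by (simp add: S_def sum_distrib_left)
    finally show ?thesis .
  qed
  have Bp0: "0 \<le> Bp" unfolding Bp_def by (intro sum_nonneg) (simp add: sqs_nonneg)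
  have sqk: "(real k powr (1/2 - 1/p))^2 = real k powr (1 - 2/p)"
    by (simp add: power2_eq_square flip: powr_add)
  have sqQ: "(Q powr (1/p))^2 = Q powr (2/p)"
    by (simp add: power2_eq_square flip: powr_add)
  have bpa: "Bp^2 \<le> 2 powr (2 - 2/p) * Z" if ph: "1/2 \<le> p"
  proof -
    have "S \<le> 2 powr (1-1/p) * Q powr (1/p)" unfolding S_def
      by (rule seq_a[OF x_nn x_dec l x_sum ph p(2)])
    hence "Bp \<le> real k powr (1/2 - 1/p) * (2 powr (1-1/p) * Q powr (1/p))"
      using Bp_le by (smt (verit) mult_left_mono powr_ge_zero)
    hence "Bp^2 \<le> (real k powr (1/2 - 1/p) * (2 powr (1-1/p) * Q powr (1/p)))^2"
      using Bp0 by (intro power_mono) auto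
    also have "\<dots> = (real k powr (1/2 - 1/p))^2 * (2 powr (1-1/p))^2 * (Q powr (1/p))^2"
      by (simp add: power_mult_distrib)
    also have "(2 powr (1-1/p))^2 = (2::real) powr (2 - 2/p)"
      by (simp add: power2_eq_square flip: powr_add)
    finally show ?thesis using sqk sqQ by (simp add: Z_def algebra_simps)
  qed
  have bpb: "Bp^2 \<le> 25/16 * g * Z" if ph: "p < 1/2"
  proof -
    have "S \<le> 5/4 * sqrt (g_fun p) * Q powr (1/p)" unfolding S_def
      by (rule seq_b[OF x_nn x_dec l x_pad x_sum p(1) ph])
    hence "Bp \<le> real k powr (1/2 - 1/p) * (5/4 * sqrt g * Q powr (1/p))"
      using Bp_le unfolding g_def by (smt (verit) mult_left_mono powr_ge_zero)
    hence "Bp^2 \<le> (real k powr (1/2 - 1/p) * (5/4 * sqrt g * Q powr (1/p)))^2"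
      using Bp0 by (intro power_mono) auto
    also have "\<dots> = (real k powr (1/2 - 1/p))^2 * (25/16 * (sqrt g)^2) * (Q powr (1/p))^2"
      by (simp add: power2_eq_square field_simps)
    also have "(sqrt g)^2 = g" using g0 by simp
    finally show ?thesis using sqk sqQ by (simp add: Z_def algebra_simps)
  qed
  have two: "(2::real) powr (2 - 2/p) = 2 * 2 powr (1 - 2/p)"
    using powr_add[of "2::real" 1 "1 - 2/p"] by simp
  have ps: "0 < p_star" "p_star < 1/2" using p_star_char by auto
  have bp: "Bp^2 \<le> 2 * (if p \<le> p_star then g else 2 powr (1 - 2/p)) * Z"
  proof (cases "p \<le> p_star")
    case True
    hence "Bp^2 \<le> 25/16 * g * Z" using ps by (intro bpb) auto
    also have "\<dots> \<le> 2 * g * Z" using g0 Z0 by (intro mult_right_mono) auto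
    finally show ?thesis using True by simp
  next
    case False
    have gl: "g \<le> 2 powr (1 - 2/p)" unfolding g_def using False p by (intro g_le_above_pstar) auto
    show ?thesis
    proof (cases "1/2 \<le> p")
      case True thus ?thesis using bpa two False by simp
    next
      case F2: False
      hence "Bp^2 \<le> 25/16 * g * Z" by (intro bpb) auto
      also have "\<dots> \<le> 2 * 2 powr (1 - 2/p) * Z" using gl g0 Z0 by (intro mult_right_mono) auto
      finally show ?thesis using False by simp
    qed
  qed
  have vi: "g \<le> 2 * \<delta> * (if p \<le> p_star then g else 2 powr (1 - 2/p))"
  proof (cases "p \<le> p_star")
    case True
    have "1 * g \<le> (2*\<delta>) * g" using d g0 by (intro mult_right_mono) auto
    thus ?thesis using True by simp
  next
    case False
    have gl: "g \<le> 2 powr (1 - 2/p)" unfolding g_def using False p by (intro g_le_above_pstar) auto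
    have "g \<le> 1 * 2 powr (1 - 2/p)" using gl by simp
    also have "\<dots> \<le> (2*\<delta>) * 2 powr (1 - 2/p)" by (rule mult_right_mono[OF d]) simp
    finally show ?thesis using False by simp
  qed
  have Cc: "C_const \<delta> p = (((2-\<delta>) powr (1 - 2/p) * g + 2 * \<delta> * (if p \<le> p_star then g else 2 powr (1 - 2/p))) / D) powr (p/2)"
  proof (cases "p \<le> p_star")
    case True thus ?thesis by (simp add: C_const_def g_def D_def algebra_simps)
  next
    case False thus ?thesis using two by (simp add: C_const_def g_def D_def algebra_simps)
  qed
  define mm where "mm = (if p \<le> p_star then g else 2 powr (1 - 2/p))"
  have mm0: "0 \<le> mm" using g0 by (simp add: mm_def)
  define E1 where "E1 = (2-\<delta>) powr (1 - 2/p) * g * Z"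
  have E10: "0 \<le> E1" using g0 Z0 by (simp add: E1_def)
  have a20: "0 \<le> a2" by (simp add: a2_def sqs_nonneg)
  have b20: "0 \<le> b2" by (simp add: b2_def sqs_nonneg)
  have tt0: "0 \<le> tt" by (simp add: tt_def sqs_nonneg sum_nonneg)
  have fa: "D*a2 \<le> (2 * sqrt 2 * \<epsilon> + sqrt (E1 + 2*\<delta>*mm*Z))^2"
    by (rule final_alg[OF D_def D0 d a20 b20 tt0 T0 e Z0 g0 mm0 E10 i1 ii])
       (use iii iv bp vi in \<open>simp_all add: E1_def mm_def\<close>)
  define Nn where "Nn = (2-\<delta>) powr (1 - 2/p) * g + 2 * \<delta> * mm"
  have Nn0: "0 \<le> Nn" using g0 mm0 d by (simp add: Nn_def)
  have NZ: "Nn * Z = E1 + 2*\<delta>*mm*Z" by (simp add: Nn_def E1_def algebra_simps)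
  have L: "(\<Sum>i<k. \<bar>h i\<bar> powr p) \<le> real k powr (1 - p/2) * a2 powr (p/2)"
    using power_mean[OF p k, of h] by (simp add: a2_eq)
  have "(\<Sum>i<k. \<bar>h i\<bar> powr p) \<le> 2 powr (3*p/2) / D powr (p/2) * real k powr (1 - p/2) * \<epsilon> powr p + C_const \<delta> p * Q"
    by (rule final_conv[OF D0 a20 e Nn0 Q0 _ p Z_def L]) (use fa NZ Cc k in \<open>simp_all add: Nn_def mm_def\<close>)
  thus ?thesis by (simp add: Q_eq D_def)
qed

theorem lemma8:
  fixes k l m n :: nat and A :: "nat \<Rightarrow> nat \<Rightarrow> real"
    and x e y xs :: "nat \<Rightarrow> real" and \<epsilon> p :: real
  assumes "k > 0" and "l > 0" and "m > 0" and "n = (l + 1) * k"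
    and "sqrt 2 / 2 \<le> ric m n A (2 * k)" and "ric m n A (2 * k) < 1"
    and "\<epsilon> \<ge> 0" and "norm2 m e \<le> \<epsilon>"
    and "y = (\<lambda>i. mat_vec m n A x i + e i)"
    and "0 < p" and "p < 1"
    and "norm2 m (\<lambda>i. y i - mat_vec m n A xs i) \<le> \<epsilon>"
    and "\<And>\<gamma>. norm2 m (\<lambda>i. y i - mat_vec m n A \<gamma> i) \<le> \<epsilon> \<Longrightarrow> lpnorm n p xs \<le> lpnorm n p \<gamma>"
  shows "(let h = (\<lambda>i. x i - xs i); \<delta> = ric m n A (2 * k) in
     (lpnorm n p (restrict_vec h {..<k})) powr p
       \<le> 2 powr (3 * p / 2) / (1 - \<delta>) powr (p / 2) * real k powr (1 - p / 2) * \<epsilon> powr p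
         + C_const \<delta> p * (lpnorm n p (restrict_vec h {k..<n})) powr p)"
proof -
  note a = assms
  define h where "h = (\<lambda>i. x i - xs i)"
  define \<delta> where "\<delta> = ric m n A (2 * k)"
  have n: "n = l*k + k" using a(4) by simp
  have rip: "\<And>z. Defs.sparse n (2*k) z \<Longrightarrow> (1-\<delta>) * sqs n z \<le> sqs m (mat_vec m n A z) \<and> sqs m (mat_vec m n A z) \<le> (1+\<delta>) * sqs n z"
    unfolding \<delta>_def by (rule ric_rip)
  have Ah_eq: "mat_vec m n A h = (\<lambda>i. (y i - mat_vec m n A xs i) - e i)"
  proof -
    have "mat_vec m n A h = mat_vec m n A (\<lambda>i. 1 * x i + (-1) * xs i)" by (simp add: h_def)
    also have "\<dots> = (\<lambda>i. 1 * mat_vec m n A x i + (-1) * mat_vec m n A xs i)" by (rule mat_vec_lin)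
    finally show ?thesis using a(9) by simp
  qed
  have "norm2 m (mat_vec m n A h) \<le> norm2 m (\<lambda>i. y i - mat_vec m n A xs i) + norm2 m e"
    unfolding Ah_eq by (rule norm2_diff_le)
  hence Ah: "norm2 m (mat_vec m n A h) \<le> 2*\<epsilon>" using a(8) a(12) by linarith
  have kn: "k \<le> n" using n by simp
  have L: "(lpnorm n p (restrict_vec h {..<k})) powr p = (\<Sum>i<k. \<bar>h i\<bar> powr p)"
    using lpnorm_powr[OF a(10)] sum_restrict_powr[of "{..<k}" n p h] kn a(10) by auto
  have R: "(lpnorm n p (restrict_vec h {k..<n})) powr p = (\<Sum>i\<in>{k..<n}. \<bar>h i\<bar> powr p)"
  proof -
    have sub: "{k..<n} \<subseteq> {..<n}" by auto
    show ?thesis using lpnorm_powr[OF a(10)] sum_restrict_powr[OF sub a(10), of h] by simp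
  qed
  have main: "(\<Sum>i<k. \<bar>h i\<bar> powr p) \<le> 2 powr (3*p/2) / (1-\<delta>) powr (p/2) * real k powr (1 - p/2) * \<epsilon> powr p
           + C_const \<delta> p * (\<Sum>i\<in>{k..<n}. \<bar>h i\<bar> powr p)"
    by (rule main_bound[OF a(1) a(2) n rip _ _ a(7) Ah a(10) a(11)]) (use a(5) a(6) in \<open>simp_all add: \<delta>_def\<close>)
  show ?thesis using main unfolding L R h_def[symmetric] \<delta>_def[symmetric] Let_def by simp
qed

end
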